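(* Let $n\ge2$, $G=\langle a_1,\ldots,a_n\mid a_1^2\cdots a_n^2\rangle$, $p=a_1^2\cdots a_n^2$, and let $P$ be the free resolution $0\to P_2\xrightarrow{d_2}P_1\xrightarrow{d_1}P_0\xrightarrow{\varepsilon}\mathbb{Z}\to0$ of $\mathbb{Z}$ over $\mathbb{Z}G$ with $P_0=\mathbb{Z}G\,x$, $P_1$ free on $y_1,\ldots,y_n$, $P_2=\mathbb{Z}G\,w$, $\varepsilon(x)=1$, $d_1(y_i)=(a_i-1)x$, $d_2(w)=\sum_{i=1}^n\frac{\partial p}{\partial a_i}y_i$. Then there is a diagonal approximation $\Delta\colon P\to P\otimes P$ such that $\Delta_0(x)=x\otimes x$, $\Delta_1(y_i)=y_i\otimes a_ix+x\otimes y_i$, $\Delta_{02}(w)=x\otimes w$, and \begin{align*} \Delta_{11}(w)=\sum_{i=1}^n\Bigl[&\Bigl(\sum_{j=1}^{i-1}(a_1^2\cdots a_{j-1}^2)(1+a_j)y_j\otimes(a_1^2\cdots a_{i-1}^2)y_i\Bigr)\\ &+\Bigl(\sum_{j=1}^{i-1}(a_1^2\cdots a_{j-1}^2)(1+a_j)y_j\otimes(a_1^2\cdots a_{i-1}^2)a_iy_i\Bigr)\\ &+(a_1^2\cdots a_{i-1}^2)y_i\otimes(a_1^2\cdots a_{i-1}^2)a_iy_i\Bigr]. \end{align*}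
   Context: Fox derivatives: $\partial g_j/\partial g_i=\delta_{ij}$, $\partial(uv)/\partial g_i=\partial u/\partial g_i+u\,\partial v/\partial g_i$, then passed to $\mathbb{Z}G$. $P\otimes P$ has $(P\otimes P)_m=\bigoplus_{r+s=m}P_r\otimes_{\mathbb{Z}}P_s$ with diagonal $G$-action, differential $\partial(u\otimes v)=du\otimes v+(-1)^ru\otimes dv$ ($u\in P_r$) and augmentation $\varepsilon\otimes\varepsilon$. A diagonal approximation is a $\mathbb{Z}G$-chain map $\Delta\colon P\to P\otimes P$ with $(\varepsilon\otimes\varepsilon)\Delta_0=\varepsilon$; $\Delta_{rs}$ is $\Delta_{r+s}$ followed by projection onto $P_r\otimes P_s$. Empty products equal $1$ and empty sums $0$. *)

theory Defs
  imports "HOL-Algebra.Group" "HOL-Library.Function_Algebras"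
begin

text \<open>Words in the free group on a_1..a_n: a letter (i,False) is a_i, (i,True) is a_i^{-1}.\<close>
type_synonym word = "(nat \<times> bool) list"
type_synonym elt = "word set"

definition letters_ok :: "nat \<Rightarrow> word \<Rightarrow> bool" where
  "letters_ok n w \<longleftrightarrow> (\<forall>l\<in>set w. 1 \<le> fst l \<and> fst l \<le> n)"

definition relator :: "nat \<Rightarrow> word" where
  "relator n = concat (map (\<lambda>i. [(i, False), (i, False)]) [1..<Suc n])"

definition elem_step :: "nat \<Rightarrow> word \<Rightarrow> word \<Rightarrow> bool" where
  "elem_step n u v \<longleftrightarrow> letters_ok n u \<and> letters_ok n v \<and>
     ((\<exists>x y i b. u = x @ [(i, b), (i, \<not> b)] @ y \<and> v = x @ y) \<or>
      (\<exists>x y. u = x @ relator n @ y \<and> v = x @ y))"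

definition word_equiv :: "nat \<Rightarrow> word \<Rightarrow> word \<Rightarrow> bool" where
  "word_equiv n = (sup (elem_step n) (elem_step n)\<inverse>\<inverse>)\<^sup>*\<^sup>*"

definition wclass :: "nat \<Rightarrow> word \<Rightarrow> elt" where
  "wclass n w = {v. letters_ok n v \<and> word_equiv n w v}"

definition surface_group :: "nat \<Rightarrow> elt monoid" where
  "surface_group n =
     \<lparr>carrier = wclass n ` {w. letters_ok n w},
      mult = (\<lambda>X Y. wclass n ((SOME u. u \<in> X) @ (SOME v. v \<in> Y))),
      one = wclass n []\<rparr>"

definition gen :: "nat \<Rightarrow> nat \<Rightarrow> elt" where
  "gen n i = wclass n [(i, False)]"

definition letter_elt :: "nat \<Rightarrow> nat \<times> bool \<Rightarrow> elt" where
  "letter_elt n l = wclass n [l]"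

definition sqprod :: "nat \<Rightarrow> nat \<Rightarrow> elt" where
  "sqprod n i = foldr (\<lambda>j acc. mult (surface_group n)
       (mult (surface_group n) (gen n j) (gen n j)) acc) [1..<i] (one (surface_group n))"

text \<open>Elements of ZG are finitely supported functions elt => int.\<close>
definition grelt :: "elt \<Rightarrow> elt \<Rightarrow> int" where
  "grelt g = (\<lambda>h. if h = g then 1 else 0)"

definition gr_shift :: "nat \<Rightarrow> elt \<Rightarrow> (elt \<Rightarrow> int) \<Rightarrow> elt \<Rightarrow> int" where
  "gr_shift n g r = (\<lambda>h. if h \<in> carrier (surface_group n)
       then r (mult (surface_group n) (m_inv (surface_group n) g) h) else 0)"

fun fox :: "nat \<Rightarrow> nat \<Rightarrow> word \<Rightarrow> elt \<Rightarrow> int" where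
  "fox n i [] = (\<lambda>_. 0)"
| "fox n i (l # w) = (\<lambda>h.
      (if fst l = i then (if snd l then - grelt (letter_elt n l) h
                          else grelt (one (surface_group n)) h) else 0)
      + gr_shift n (letter_elt n l) (fox n i w) h)"

text \<open>An element of P (all degrees together) is a finitely supported integer function on
  triples (k, g, b): degree k, group element g, basis index b.  Basis of P_0: {0} (x),
  of P_1: {1..n} (y_i), of P_2: {0} (w).  The free Z-module on G x basis is the free
  ZG-module on the basis.\<close>
type_synonym chain = "nat \<times> elt \<times> nat \<Rightarrow> int"
type_synonym tchain = "(nat \<times> elt \<times> nat) \<times> (nat \<times> elt \<times> nat) \<Rightarrow> int"

definition basis_set :: "nat \<Rightarrow> nat \<Rightarrow> nat set" where
  "basis_set n k = (if k = 0 \<or> k = 2 then {0} else if k = 1 then {1..n} else {})"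

definition valid :: "nat \<Rightarrow> nat \<times> elt \<times> nat \<Rightarrow> bool" where
  "valid n t \<longleftrightarrow> fst (snd t) \<in> carrier (surface_group n) \<and> snd (snd t) \<in> basis_set n (fst t)"

definition in_P :: "nat \<Rightarrow> nat \<Rightarrow> chain \<Rightarrow> bool" where
  "in_P n k f \<longleftrightarrow> finite {t. f t \<noteq> 0} \<and> (\<forall>t. f t \<noteq> 0 \<longrightarrow> fst t = k \<and> valid n t)"

definition gelt :: "elt \<Rightarrow> nat \<Rightarrow> nat \<Rightarrow> chain" where
  "gelt g k b = (\<lambda>t. if t = (k, g, b) then 1 else 0)"

definition ind :: "nat \<times> elt \<times> nat \<Rightarrow> chain" where
  "ind s = (\<lambda>t. if t = s then 1 else 0)"

definition act :: "nat \<Rightarrow> elt \<Rightarrow> chain \<Rightarrow> chain" where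
  "act n g f = (\<lambda>(k, h, b). if h \<in> carrier (surface_group n)
       then f (k, mult (surface_group n) (m_inv (surface_group n) g) h, b) else 0)"

definition smul :: "nat \<Rightarrow> (elt \<Rightarrow> int) \<Rightarrow> chain \<Rightarrow> chain" where
  "smul n r f = (\<Sum>g\<in>{g \<in> carrier (surface_group n). r g \<noteq> 0}. (\<lambda>t. r g * act n g f t))"

definition xgen :: "nat \<Rightarrow> chain" where "xgen n = gelt (one (surface_group n)) 0 0"
definition ygen :: "nat \<Rightarrow> nat \<Rightarrow> chain" where "ygen n i = gelt (one (surface_group n)) 1 i"
definition wgen :: "nat \<Rightarrow> chain" where "wgen n = gelt (one (surface_group n)) 2 0"

definition d_gen :: "nat \<Rightarrow> nat \<times> elt \<times> nat \<Rightarrow> chain" where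
  "d_gen n t = (case t of (k, g, b) \<Rightarrow>
     if k = 1 then act n g (gelt (gen n b) 0 0 - xgen n)
     else if k = 2 then act n g (\<Sum>i\<in>{1..n}. smul n (fox n i (relator n)) (ygen n i))
     else (\<lambda>_. 0))"

definition dP :: "nat \<Rightarrow> chain \<Rightarrow> chain" where
  "dP n f = (\<lambda>s. \<Sum>t\<in>{t. f t \<noteq> 0}. f t * d_gen n t s)"

definition epsP :: "chain \<Rightarrow> int" where
  "epsP f = (\<Sum>t\<in>{t. f t \<noteq> 0}. f t)"

text \<open>P_r (x)_Z P_s is realised as the free abelian group on (G x B_r) x (G x B_s);
  u (x) v is the product function.\<close>
definition tensor :: "chain \<Rightarrow> chain \<Rightarrow> tchain" where
  "tensor u v = (\<lambda>(p, q). u p * v q)"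

definition in_T :: "nat \<Rightarrow> nat \<Rightarrow> tchain \<Rightarrow> bool" where
  "in_T n m F \<longleftrightarrow> finite {z. F z \<noteq> 0} \<and>
     (\<forall>z. F z \<noteq> 0 \<longrightarrow> fst (fst z) + fst (snd z) = m \<and> valid n (fst z) \<and> valid n (snd z))"

definition tact :: "nat \<Rightarrow> elt \<Rightarrow> tchain \<Rightarrow> tchain" where
  "tact n g F = (\<lambda>((k, h, b), (k', h', b')).
     if h \<in> carrier (surface_group n) \<and> h' \<in> carrier (surface_group n)
     then F ((k, mult (surface_group n) (m_inv (surface_group n) g) h, b),
             (k', mult (surface_group n) (m_inv (surface_group n) g) h', b'))
     else 0)"

definition tdiff :: "nat \<Rightarrow> tchain \<Rightarrow> tchain" where
  "tdiff n F = (\<lambda>z. \<Sum>pq\<in>{z. F z \<noteq> 0}. F pq *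
      (tensor (d_gen n (fst pq)) (ind (snd pq)) z
       + (-1) ^ fst (fst pq) * tensor (ind (fst pq)) (d_gen n (snd pq)) z))"

definition teps :: "tchain \<Rightarrow> int" where
  "teps F = (\<Sum>pq\<in>{z. F z \<noteq> 0}. F pq * (if fst (fst pq) = 0 \<and> fst (snd pq) = 0 then 1 else 0))"

definition proj :: "nat \<Rightarrow> tchain \<Rightarrow> tchain" where
  "proj r F = (\<lambda>z. if fst (fst z) = r then F z else 0)"

definition is_diagonal_approx :: "nat \<Rightarrow> (nat \<Rightarrow> chain \<Rightarrow> tchain) \<Rightarrow> bool" where
  "is_diagonal_approx n \<Delta> \<longleftrightarrow>
     (\<forall>k f. in_P n k f \<longrightarrow> in_T n k (\<Delta> k f)) \<and>
     (\<forall>k f f'. in_P n k f \<longrightarrow> in_P n k f' \<longrightarrow> \<Delta> k (f + f') = \<Delta> k f + \<Delta> k f') \<and>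
     (\<forall>k g f. g \<in> carrier (surface_group n) \<longrightarrow> in_P n k f \<longrightarrow>
         \<Delta> k (act n g f) = tact n g (\<Delta> k f)) \<and>
     (\<forall>k f. in_P n (Suc k) f \<longrightarrow> tdiff n (\<Delta> (Suc k) f) = \<Delta> k (dP n f)) \<and>
     (\<forall>f. in_P n 0 f \<longrightarrow> teps (\<Delta> 0 f) = epsP f)"

end

theory Submission
  imports Defs
begin


abbreviation "SG n \<equiv> surface_group n"
abbreviation "Wq n \<equiv> word_equiv n"

lemma letters_ok_append[simp]: "letters_ok n (u @ v) \<longleftrightarrow> letters_ok n u \<and> letters_ok n v"
  by (auto simp: letters_ok_def)
lemma letters_ok_Cons[simp]: "letters_ok n (l # v) \<longleftrightarrow> 1 \<le> fst l \<and> fst l \<le> n \<and> letters_ok n v"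
  by (auto simp: letters_ok_def)
lemma letters_ok_Nil[simp]: "letters_ok n []"
  by (auto simp: letters_ok_def)

lemma Wq_refl: "Wq n u u" by (simp add: word_equiv_def)

lemma Wq_sym: assumes "Wq n u v" shows "Wq n v u"
  using assms unfolding word_equiv_def
proof (induction rule: rtranclp_induct)
  case base then show ?case by simp
next
  case (step y z)
  have "(sup (elem_step n) (elem_step n)\<inverse>\<inverse>) z y" using step(2) by auto
  then show ?case using step(3) by (meson converse_rtranclp_into_rtranclp)
qed

lemma Wq_trans: "Wq n u v \<Longrightarrow> Wq n v w \<Longrightarrow> Wq n u w"
  unfolding word_equiv_def by (rule rtranclp_trans)

lemma Wq_ok: assumes "Wq n u v" "letters_ok n u" shows "letters_ok n v"
  using assms unfolding word_equiv_def
  by (induction rule: rtranclp_induct) (auto simp: elem_step_def)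

lemma step_cong: assumes "elem_step n u v" "letters_ok n x" "letters_ok n y"
  shows "elem_step n (x @ u @ y) (x @ v @ y)"
proof -
  from assms(1) have ok: "letters_ok n u" "letters_ok n v" by (auto simp: elem_step_def)
  from assms(1) consider (a) x0 y0 i b where "u = x0 @ [(i, b), (i, \<not> b)] @ y0" "v = x0 @ y0"
    | (b) x0 y0 where "u = x0 @ relator n @ y0" "v = x0 @ y0"
    unfolding elem_step_def by blast
  then show ?thesis
  proof cases
    case a
    have "x @ u @ y = (x @ x0) @ [(i, b), (i, \<not> b)] @ (y0 @ y)" "x @ v @ y = (x @ x0) @ (y0 @ y)"
      using a by auto
    moreover have "letters_ok n (x @ u @ y)" "letters_ok n (x @ v @ y)" using ok assms(2,3) by simp_all
    ultimately show ?thesis unfolding elem_step_def by blast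
  next
    case b
    have "x @ u @ y = (x @ x0) @ relator n @ (y0 @ y)" "x @ v @ y = (x @ x0) @ (y0 @ y)"
      using b by auto
    moreover have "letters_ok n (x @ u @ y)" "letters_ok n (x @ v @ y)" using ok assms(2,3) by simp_all
    ultimately show ?thesis unfolding elem_step_def by blast
  qed
qed

lemma Wq_cong: assumes "Wq n u v" "letters_ok n x" "letters_ok n y"
  shows "Wq n (x @ u @ y) (x @ v @ y)"
  using assms(1) unfolding word_equiv_def
proof (induction rule: rtranclp_induct)
  case base then show ?case by simp
next
  case (step y' z)
  have "(sup (elem_step n) (elem_step n)\<inverse>\<inverse>) (x @ y' @ y) (x @ z @ y)"
    using step(2) step_cong[OF _ assms(2,3)] by auto
  then show ?case using step(3) by (meson rtranclp.rtrancl_into_rtrancl)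
qed

lemma wclass_eq: assumes "letters_ok n u" "Wq n u v" shows "wclass n u = wclass n v"
  using assms unfolding wclass_def by (auto intro: Wq_trans Wq_sym)

lemma wclass_mem: "letters_ok n u \<Longrightarrow> u \<in> wclass n u"
  by (simp add: wclass_def Wq_refl)

lemma some_wclass: assumes "letters_ok n u"
  shows "letters_ok n (SOME r. r \<in> wclass n u) \<and> Wq n u (SOME r. r \<in> wclass n u)"
proof -
  have "(SOME r. r \<in> wclass n u) \<in> wclass n u" by (rule someI[of _ u]) (rule wclass_mem[OF assms])
  then show ?thesis by (simp add: wclass_def)
qed

lemma mult_wclass: assumes "letters_ok n u" "letters_ok n v"
  shows "mult (SG n) (wclass n u) (wclass n v) = wclass n (u @ v)"
proof -
  define r1 where "r1 = (SOME r. r \<in> wclass n u)"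
  define r2 where "r2 = (SOME r. r \<in> wclass n v)"
  have 1: "letters_ok n r1" "Wq n u r1" using some_wclass[OF assms(1)] r1_def by auto
  have 2: "letters_ok n r2" "Wq n v r2" using some_wclass[OF assms(2)] r2_def by auto
  have "Wq n ([] @ u @ v) ([] @ r1 @ v)" by (rule Wq_cong) (use 1 assms in auto)
  moreover have "Wq n (r1 @ v @ []) (r1 @ r2 @ [])" by (rule Wq_cong) (use 2 1 in auto)
  ultimately have "Wq n (u @ v) (r1 @ r2)" by (auto intro: Wq_trans)
  moreover have "mult (SG n) (wclass n u) (wclass n v) = wclass n (r1 @ r2)"
    by (simp add: surface_group_def r1_def r2_def)
  ultimately show ?thesis using assms by (simp add: wclass_eq)
qed

definition inv_word :: "word \<Rightarrow> word" where
  "inv_word w = rev (map (\<lambda>(i, b). (i, \<not> b)) w)"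

lemma inv_word_ok: "letters_ok n w \<Longrightarrow> letters_ok n (inv_word w)"
  by (auto simp: letters_ok_def inv_word_def)

lemma inv_word_cancel: "letters_ok n w \<Longrightarrow> Wq n (inv_word w @ w) []"
proof (induction w)
  case Nil then show ?case by (simp add: inv_word_def Wq_refl)
next
  case (Cons l w)
  obtain i b where l: "l = (i, b)" by (cases l)
  have iw: "inv_word (l # w) = inv_word w @ [(i, \<not> b)]" by (simp add: inv_word_def l)
  have okw: "letters_ok n (inv_word w)" using Cons.prems inv_word_ok by auto
  have o1: "letters_ok n (inv_word w @ [(i, \<not> b), (i, \<not> \<not> b)] @ w)" "letters_ok n (inv_word w @ w)"
    using Cons.prems okw l by auto
  have "elem_step n (inv_word w @ [(i, \<not> b), (i, \<not> \<not> b)] @ w) (inv_word w @ w)"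
    unfolding elem_step_def using o1 by blast
  then have "Wq n (inv_word (l # w) @ l # w) (inv_word w @ w)"
    unfolding word_equiv_def iw by (intro r_into_rtranclp) (simp add: l)
  then show ?case using Cons by (auto intro: Wq_trans)
qed

lemma SG_carrier: "carrier (SG n) = wclass n ` {w. letters_ok n w}"
  by (simp add: surface_group_def)
lemma SG_one: "one (SG n) = wclass n []"
  by (simp add: surface_group_def)

lemma grp: "group (SG n)"
proof (rule groupI)
  fix x y assume "x \<in> carrier (SG n)" "y \<in> carrier (SG n)"
  then show "x \<otimes>\<^bsub>SG n\<^esub> y \<in> carrier (SG n)"
    by (auto simp: SG_carrier mult_wclass)
next
  show "\<one>\<^bsub>SG n\<^esub> \<in> carrier (SG n)" by (auto simp: SG_carrier SG_one)
next
  fix x y z assume "x \<in> carrier (SG n)" "y \<in> carrier (SG n)" "z \<in> carrier (SG n)"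
  then show "x \<otimes>\<^bsub>SG n\<^esub> y \<otimes>\<^bsub>SG n\<^esub> z = x \<otimes>\<^bsub>SG n\<^esub> (y \<otimes>\<^bsub>SG n\<^esub> z)"
    by (auto simp: SG_carrier mult_wclass)
next
  fix x assume "x \<in> carrier (SG n)"
  then show "\<one>\<^bsub>SG n\<^esub> \<otimes>\<^bsub>SG n\<^esub> x = x"
    by (auto simp: SG_carrier SG_one mult_wclass)
next
  fix x assume "x \<in> carrier (SG n)"
  then obtain w where w: "letters_ok n w" "x = wclass n w" by (auto simp: SG_carrier)
  show "\<exists>y\<in>carrier (SG n). y \<otimes>\<^bsub>SG n\<^esub> x = \<one>\<^bsub>SG n\<^esub>"
    using w inv_word_ok[OF w(1)] inv_word_cancel[OF w(1)]
    by (auto simp: SG_carrier SG_one mult_wclass intro!: bexI[of _ "wclass n (inv_word w)"] wclass_eq)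
qed

interpretation sg: group "SG n" for n by (rule grp)

lemma wclass_carrier: "letters_ok n w \<Longrightarrow> wclass n w \<in> carrier (SG n)"
  by (auto simp: SG_carrier)

lemma gen_carrier: "1 \<le> i \<Longrightarrow> i \<le> n \<Longrightarrow> gen n i \<in> carrier (SG n)"
  unfolding gen_def by (rule wclass_carrier) simp

definition sq :: "nat \<Rightarrow> word" where
  "sq i = concat (map (\<lambda>j. [(j, False), (j, False)]) [1..<i])"

lemma sq_ok: "i \<le> Suc n \<Longrightarrow> letters_ok n (sq i)"
  by (auto simp: sq_def letters_ok_def)

lemma foldr_sq: "(\<forall>j\<in>set L. 1 \<le> j \<and> j \<le> n) \<Longrightarrow>
  foldr (\<lambda>j acc. mult (SG n) (mult (SG n) (gen n j) (gen n j)) acc) L (one (SG n))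
  = wclass n (concat (map (\<lambda>j. [(j, False), (j, False)]) L))"
proof (induction L)
  case Nil then show ?case by (simp add: SG_one)
next
  case (Cons j L)
  have ok: "letters_ok n (concat (map (\<lambda>j. [(j, False), (j, False)]) L))"
    using Cons.prems by (auto simp: letters_ok_def)
  show ?case using Cons ok by (simp add: gen_def mult_wclass)
qed

lemma sqprod_sq: "i \<le> Suc n \<Longrightarrow> sqprod n i = wclass n (sq i)"
  unfolding sqprod_def sq_def by (rule foldr_sq) auto

lemma sqprod_carrier: "i \<le> Suc n \<Longrightarrow> sqprod n i \<in> carrier (SG n)"
  using sqprod_sq sq_ok wclass_carrier by simp

lemma sqprod_Suc: assumes "1 \<le> i" "i \<le> n"
  shows "sqprod n (Suc i) = sqprod n i \<otimes>\<^bsub>SG n\<^esub> gen n i \<otimes>\<^bsub>SG n\<^esub> gen n i"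
proof -
  have "sq (Suc i) = sq i @ [(i, False)] @ [(i, False)]" using assms by (simp add: sq_def)
  then show ?thesis using assms sq_ok[of i n]
    by (simp add: sqprod_sq gen_def mult_wclass)
qed

lemma sqprod_1: "sqprod n 1 = one (SG n)"
  by (simp add: sqprod_def)

lemma relator_sq: "relator n = sq (Suc n)"
  by (simp add: relator_def sq_def)

lemma sqprod_last: "sqprod n (Suc n) = one (SG n)"
proof -
  have "elem_step n (relator n) []" unfolding elem_step_def
    using sq_ok[of "Suc n" n] by (auto simp: relator_sq)
  then have "Wq n (relator n) []" by (auto simp: word_equiv_def)
  then show ?thesis using sq_ok[of "Suc n" n]
    by (simp add: sqprod_sq SG_one relator_sq wclass_eq)
qed



lemma gr_shift_add: "gr_shift n g (r + s) = gr_shift n g r + gr_shift n g s"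
  by (auto simp: gr_shift_def fun_eq_iff)
lemma gr_shift_zero: "gr_shift n g (\<lambda>_. 0) = (\<lambda>_. 0)"
  by (auto simp: gr_shift_def fun_eq_iff)
lemma gr_shift_comp: assumes "g \<in> carrier (SG n)" "h \<in> carrier (SG n)"
  shows "gr_shift n g (gr_shift n h r) = gr_shift n (g \<otimes>\<^bsub>SG n\<^esub> h) r"
  using assms by (auto simp: gr_shift_def fun_eq_iff sg.inv_mult_group sg.m_assoc)
lemma gr_shift_one: assumes "\<And>h. r h \<noteq> 0 \<Longrightarrow> h \<in> carrier (SG n)"
  shows "gr_shift n (one (SG n)) r = r"
  using assms by (auto simp: gr_shift_def fun_eq_iff)
lemma gr_shift_grelt: assumes "g \<in> carrier (SG n)" "h \<in> carrier (SG n)"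
  shows "gr_shift n g (grelt h) = grelt (g \<otimes>\<^bsub>SG n\<^esub> h)"
proof -
  have "\<And>x. x \<in> carrier (SG n) \<Longrightarrow> (inv\<^bsub>SG n\<^esub> g \<otimes>\<^bsub>SG n\<^esub> x = h) = (x = g \<otimes>\<^bsub>SG n\<^esub> h)"
    using assms by (metis sg.inv_closed sg.inv_solve_left)
  then show ?thesis using assms by (auto simp: gr_shift_def grelt_def fun_eq_iff)
qed

lemma letter_carrier: "1 \<le> fst l \<Longrightarrow> fst l \<le> n \<Longrightarrow> letter_elt n l \<in> carrier (SG n)"
  unfolding letter_elt_def by (rule wclass_carrier) simp

lemma fox_supp: "letters_ok n w \<Longrightarrow> fox n i w h \<noteq> 0 \<Longrightarrow> h \<in> carrier (SG n)"
proof (induction w arbitrary: h)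
  case Nil then show ?case by simp
next
  case (Cons l w)
  then show ?case using letter_carrier[of l n]
    by (auto simp: grelt_def gr_shift_def split: if_splits)
qed

lemma fox_append: assumes "letters_ok n u" "letters_ok n v"
  shows "fox n i (u @ v) = fox n i u + gr_shift n (wclass n u) (fox n i v)"
  using assms(1)
proof (induction u)
  case Nil
  have "gr_shift n (wclass n []) (fox n i v) = fox n i v"
    using gr_shift_one[of "fox n i v" n] fox_supp[OF assms(2)] by (simp add: SG_one)
  then show ?case by (simp add: fun_eq_iff)
next
  case (Cons l u)
  have lc: "letter_elt n l \<in> carrier (SG n)" "wclass n u \<in> carrier (SG n)"
    using Cons.prems letter_carrier[of l n] wclass_carrier[of n u] by auto
  have m: "letter_elt n l \<otimes>\<^bsub>SG n\<^esub> wclass n u = wclass n (l # u)"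
    using Cons.prems mult_wclass[of n "[l]" u] by (simp add: letter_elt_def)
  have "fox n i ((l # u) @ v) = (\<lambda>h. (if fst l = i then (if snd l then - grelt (letter_elt n l) h
                          else grelt (one (SG n)) h) else 0)
      + gr_shift n (letter_elt n l) (fox n i u + gr_shift n (wclass n u) (fox n i v)) h)"
    using Cons.prems by (simp only: append_Cons fox.simps(2) Cons.IH letters_ok_Cons)
  also have "\<dots> = fox n i (l # u) + gr_shift n (wclass n (l # u)) (fox n i v)"
    by (simp add: gr_shift_add gr_shift_comp[OF lc] m fun_eq_iff)
  finally show ?case .
qed

lemma fox_pair: assumes "1 \<le> j" "j \<le> n"
  shows "fox n i [(j, False), (j, False)] =
    (if j = i then grelt (one (SG n)) + grelt (gen n j) else (\<lambda>_. 0))"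
proof -
  have g: "gen n j \<in> carrier (SG n)" using gen_carrier[OF assms] .
  have le: "letter_elt n (j, False) = gen n j" by (simp add: letter_elt_def gen_def)
  have f1: "fox n i [(j, False)] = (if j = i then grelt (one (SG n)) else (\<lambda>_. 0))"
    by (auto simp: fun_eq_iff le gr_shift_zero)
  have "fox n i [(j, False), (j, False)] = (if j = i then grelt (one (SG n)) else (\<lambda>_. 0))
      + gr_shift n (gen n j) (fox n i [(j, False)])"
    by (simp only: fox.simps le) (auto simp: fun_eq_iff)
  also have "\<dots> = (if j = i then grelt (one (SG n)) + grelt (gen n j) else (\<lambda>_. 0))"
    unfolding f1 using g by (auto simp: gr_shift_zero gr_shift_grelt fun_eq_iff)
  finally show ?thesis .
qed

lemma fox_sq: assumes "1 \<le> i" "i \<le> n" "k \<le> Suc n"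
  shows "fox n i (sq k) = (if i < k then grelt (sqprod n i) + grelt (sqprod n i \<otimes>\<^bsub>SG n\<^esub> gen n i)
                           else (\<lambda>_. 0))"
  using assms(3)
proof (induction k)
  case 0 then show ?case by (simp add: sq_def)
next
  case (Suc k)
  show ?case
  proof (cases "k = 0")
    case True then show ?thesis using assms by (simp add: sq_def)
  next
    case False
    have sqS: "sq (Suc k) = sq k @ [(k, False), (k, False)]" using False by (simp add: sq_def)
    have okk: "letters_ok n (sq k)" using Suc.prems sq_ok by simp
    have ok2: "letters_ok n [(k, False), (k, False)]" using Suc.prems False by simp
    have IH: "fox n i (sq k) = (if i < k then grelt (sqprod n i) + grelt (sqprod n i \<otimes>\<^bsub>SG n\<^esub> gen n i)
                           else (\<lambda>_. 0))" using Suc by simp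
    have sc: "sqprod n k \<in> carrier (SG n)" using sqprod_carrier Suc.prems by simp
    have gk: "gen n k \<in> carrier (SG n)" using gen_carrier False Suc.prems by simp
    have fp: "fox n i [(k, False), (k, False)] =
       (if k = i then grelt (one (SG n)) + grelt (gen n k) else (\<lambda>_. 0))"
      using fox_pair False Suc.prems by simp
    have ws: "wclass n (sq k) = sqprod n k" using sqprod_sq Suc.prems by simp
    show ?thesis
      unfolding sqS fox_append[OF okk ok2] IH fp ws
      using sc gk by (auto simp: gr_shift_add gr_shift_grelt gr_shift_zero fun_eq_iff less_Suc_eq)
  qed
qed

lemma fox_relator: assumes "1 \<le> i" "i \<le> n"
  shows "fox n i (relator n) = grelt (sqprod n i) + grelt (sqprod n i \<otimes>\<^bsub>SG n\<^esub> gen n i)"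
  using fox_sq[OF assms, of "Suc n"] assms by (simp add: relator_sq)



definition pt :: "'a \<Rightarrow> 'a \<Rightarrow> int" where "pt a = (\<lambda>t. if t = a then 1 else 0)"
definition Lin :: "('a \<Rightarrow> 'b \<Rightarrow> int) \<Rightarrow> ('a \<Rightarrow> int) \<Rightarrow> 'b \<Rightarrow> int" where
  "Lin D F = (\<lambda>z. \<Sum>t\<in>{t. F t \<noteq> 0}. F t * D t z)"
abbreviation fs :: "('a \<Rightarrow> int) \<Rightarrow> bool" where "fs F \<equiv> finite {t. F t \<noteq> 0}"

lemma sum_fun_apply: "(sum F A) x = sum (\<lambda>a. F a x) A"
  by (induction A rule: infinite_finite_induct) auto

lemma Lin_superset: "finite S \<Longrightarrow> {t. F t \<noteq> 0} \<subseteq> S \<Longrightarrow> Lin D F z = (\<Sum>t\<in>S. F t * D t z)"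
  unfolding Lin_def by (rule sum.mono_neutral_left) auto

lemma fs_add: "fs F \<Longrightarrow> fs G \<Longrightarrow> fs (F + G)"
  by (rule finite_subset[of _ "{t. F t \<noteq> 0} \<union> {t. G t \<noteq> 0}"]) auto
lemma fs_uminus: "fs F \<Longrightarrow> fs (- F)"
  by simp
lemma fs_diff: "fs F \<Longrightarrow> fs G \<Longrightarrow> fs (F - G)"
  by (rule finite_subset[of _ "{t. F t \<noteq> 0} \<union> {t. G t \<noteq> 0}"]) auto
lemma fs_zero: "fs (0::'a\<Rightarrow>int)" "fs (\<lambda>_::'a. 0::int)" by simp_all
lemma fs_sum: "(\<And>i. i \<in> I \<Longrightarrow> fs (F i)) \<Longrightarrow> fs (\<Sum>i\<in>I. F i)"
proof (induction I rule: infinite_finite_induct)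
  case (insert x I)
  have "fs (F x + sum F I)" by (rule fs_add) (use insert in auto)
  then show ?case using insert by simp
qed auto
lemma fs_pt: "fs (pt a)" by (simp add: pt_def)

lemma Lin_add: assumes "fs F" "fs G" shows "Lin D (F + G) = Lin D F + Lin D G"
proof (rule ext)
  fix z
  let ?S = "{t. F t \<noteq> 0} \<union> {t. G t \<noteq> 0}"
  have "Lin D (F + G) z = (\<Sum>t\<in>?S. (F + G) t * D t z)"
    by (rule Lin_superset) (use assms in auto)
  also have "\<dots> = (\<Sum>t\<in>?S. F t * D t z) + (\<Sum>t\<in>?S. G t * D t z)"
    by (simp add: algebra_simps sum.distrib)
  also have "\<dots> = Lin D F z + Lin D G z"
    using Lin_superset[of ?S F D z] Lin_superset[of ?S G D z] assms by auto
  finally show "Lin D (F + G) z = (Lin D F + Lin D G) z" by simp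
qed

lemma Lin_uminus: "Lin D (- F) = - Lin D F"
  by (auto simp: Lin_def fun_eq_iff sum_negf[symmetric])

lemma Lin_diff: assumes "fs F" "fs G" shows "Lin D (F - G) = Lin D F - Lin D G"
  using Lin_add[OF assms(1) fs_uminus[OF assms(2)], of D] by (simp only: diff_conv_add_uminus Lin_uminus)

lemma Lin_zero: "Lin D 0 = 0" "Lin D (\<lambda>_. 0) = 0"
  by (auto simp: Lin_def fun_eq_iff)

lemma Lin_sum: assumes "finite I" "\<And>i. i \<in> I \<Longrightarrow> fs (F i)"
  shows "Lin D (\<Sum>i\<in>I. F i) = (\<Sum>i\<in>I. Lin D (F i))"
  using assms
proof (induction I rule: finite_induct)
  case empty then show ?case by (simp add: Lin_zero)
next
  case (insert x I)
  have "fs (F x)" "fs (sum F I)" using insert by (auto intro: fs_sum)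
  then have "Lin D (F x + sum F I) = Lin D (F x) + Lin D (sum F I)" by (rule Lin_add)
  moreover have "Lin D (sum F I) = (\<Sum>i\<in>I. Lin D (F i))" using insert by auto
  moreover have "sum F (insert x I) = F x + sum F I" using insert(1,2) by (rule sum.insert)
  moreover have "(\<Sum>i\<in>insert x I. Lin D (F i)) = Lin D (F x) + (\<Sum>i\<in>I. Lin D (F i))"
    using insert(1,2) by (rule sum.insert)
  ultimately show ?case by metis
qed

lemma Lin_pt: "Lin D (pt a) = D a"
proof (rule ext)
  fix z show "Lin D (pt a) z = D a z"
    using Lin_superset[of "{a}" "pt a" D z] by (simp add: pt_def)
qed

lemma fs_Lin: assumes "fs F" "\<And>t. F t \<noteq> 0 \<Longrightarrow> fs (D t)" shows "fs (Lin D F)"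
proof (rule finite_subset)
  show "{z. Lin D F z \<noteq> 0} \<subseteq> (\<Union>t\<in>{t. F t \<noteq> 0}. {z. D t z \<noteq> 0})"
  proof
    fix z assume "z \<in> {z. Lin D F z \<noteq> 0}"
    then have "(\<Sum>t\<in>{t. F t \<noteq> 0}. F t * D t z) \<noteq> 0" by (simp add: Lin_def)
    then obtain t where "t \<in> {t. F t \<noteq> 0}" "F t * D t z \<noteq> 0" by (rule sum.not_neutral_contains_not_neutral)
    then show "z \<in> (\<Union>t\<in>{t. F t \<noteq> 0}. {z. D t z \<noteq> 0})" by auto
  qed
  show "finite (\<Union>t\<in>{t. F t \<noteq> 0}. {z. D t z \<noteq> 0})" using assms by auto
qed

lemma supp_Lin: assumes "Lin D F z \<noteq> 0" shows "\<exists>t. F t \<noteq> 0 \<and> D t z \<noteq> 0"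
proof -
  from assms have "(\<Sum>t\<in>{t. F t \<noteq> 0}. F t * D t z) \<noteq> 0" by (simp add: Lin_def)
  then obtain t where "t \<in> {t. F t \<noteq> 0}" "F t * D t z \<noteq> 0" by (rule sum.not_neutral_contains_not_neutral)
  then show ?thesis by auto
qed

lemma Lin_compose: assumes "fs F" "\<And>t. F t \<noteq> 0 \<Longrightarrow> fs (E t)"
  shows "Lin D (Lin E F) = Lin (\<lambda>t. Lin D (E t)) F"
proof (rule ext)
  fix z
  let ?S = "{t. F t \<noteq> 0}"
  let ?U = "\<Union>t\<in>?S. {u. E t u \<noteq> 0}"
  have fU: "finite ?U" using assms by auto
  have sub: "{u. Lin E F u \<noteq> 0} \<subseteq> ?U" using supp_Lin[of E F] by blast
  have "Lin D (Lin E F) z = (\<Sum>u\<in>?U. Lin E F u * D u z)" by (rule Lin_superset[OF fU sub])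
  also have "\<dots> = (\<Sum>u\<in>?U. \<Sum>t\<in>?S. F t * E t u * D u z)"
    by (simp add: Lin_def sum_distrib_right)
  also have "\<dots> = (\<Sum>t\<in>?S. F t * (\<Sum>u\<in>?U. E t u * D u z))"
    by (subst sum.swap) (simp add: sum_distrib_left mult.assoc)
  also have "\<dots> = (\<Sum>t\<in>?S. F t * Lin D (E t) z)"
  proof (rule sum.cong[OF refl])
    fix t assume "t \<in> ?S"
    then have "{u. E t u \<noteq> 0} \<subseteq> ?U" by auto
    from Lin_superset[OF fU this, of D z]
    show "F t * (\<Sum>u\<in>?U. E t u * D u z) = F t * Lin D (E t) z" by simp
  qed
  finally show "Lin D (Lin E F) z = Lin (\<lambda>t. Lin D (E t)) F z" by (simp add: Lin_def)
qed

lemma ind_pt: "ind = pt" by (auto simp: ind_def pt_def fun_eq_iff)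
lemma gelt_pt: "gelt g k b = pt (k, g, b)" by (auto simp: gelt_def pt_def fun_eq_iff)
lemma tensor_pt: "tensor (pt p) (pt q) = pt (p, q)" by (auto simp: tensor_def pt_def fun_eq_iff)

lemma tensor_add_left: "tensor (u + u') v = tensor u v + tensor u' v"
  by (auto simp: tensor_def fun_eq_iff algebra_simps)
lemma tensor_add_right: "tensor u (v + v') = tensor u v + tensor u v'"
  by (auto simp: tensor_def fun_eq_iff algebra_simps)
lemma tensor_diff_left: "tensor (u - u') v = tensor u v - tensor u' v"
  by (auto simp: tensor_def fun_eq_iff algebra_simps)
lemma tensor_diff_right: "tensor u (v - v') = tensor u v - tensor u v'"
  by (auto simp: tensor_def fun_eq_iff algebra_simps)
lemma tensor_zero: "tensor 0 v = 0" "tensor u 0 = 0"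
  by (auto simp: tensor_def fun_eq_iff)
lemma tensor_sum_left: "tensor (\<Sum>i\<in>I. F i) v = (\<Sum>i\<in>I. tensor (F i) v)"
  by (rule ext) (auto simp: tensor_def sum_fun_apply sum_distrib_right split: prod.splits)
lemma tensor_sum_right: "tensor u (\<Sum>i\<in>I. F i) = (\<Sum>i\<in>I. tensor u (F i))"
  by (rule ext) (auto simp: tensor_def sum_fun_apply sum_distrib_left split: prod.splits)
lemma fs_tensor: assumes "fs u" "fs v" shows "fs (tensor u v)"
  by (rule finite_subset[of _ "{t. u t \<noteq> 0} \<times> {t. v t \<noteq> 0}"]) (use assms in \<open>auto simp: tensor_def\<close>)

definition TD :: "nat \<Rightarrow> (nat \<times> elt \<times> nat) \<times> (nat \<times> elt \<times> nat) \<Rightarrow> tchain" where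
  "TD n pq = (\<lambda>z. tensor (d_gen n (fst pq)) (ind (snd pq)) z
       + (-1) ^ fst (fst pq) * tensor (ind (fst pq)) (d_gen n (snd pq)) z)"

lemma tdiff_Lin: "tdiff n = Lin (TD n)"
  by (auto simp: tdiff_def Lin_def TD_def fun_eq_iff)
lemma dP_Lin: "dP n = Lin (d_gen n)"
  by (auto simp: dP_def Lin_def fun_eq_iff)

lemma tdiff_tensor: assumes "fs u" "fs v" "\<And>p. u p \<noteq> 0 \<Longrightarrow> fst p = r"
  shows "tdiff n (tensor u v) = tensor (dP n u) v + (\<lambda>z. (-1) ^ r * tensor u (dP n v) z)"
proof (rule ext)
  fix z :: "(nat \<times> elt \<times> nat) \<times> (nat \<times> elt \<times> nat)"
  obtain a b where z: "z = (a, b)" by (cases z)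
  let ?A = "{t. u t \<noteq> 0}" and ?B = "{t. v t \<noteq> 0}"
  have fA: "finite ?A" and fB: "finite ?B" using assms by auto
  have sub: "{t. tensor u v t \<noteq> 0} \<subseteq> ?A \<times> ?B" by (auto simp: tensor_def)
  have sv: "(\<Sum>q\<in>?B. v q * pt q b) = v b"
    by (cases "b \<in> ?B") (auto simp: pt_def sum.delta[OF fB] sum.delta'[OF fB] mult.commute if_distrib cong: if_cong)
  have su: "(\<Sum>p\<in>?A. u p * pt p a) = u a"
    by (cases "a \<in> ?A") (auto simp: pt_def sum.delta[OF fA] sum.delta'[OF fA] mult.commute if_distrib cong: if_cong)
  have "tdiff n (tensor u v) z = (\<Sum>pq\<in>?A \<times> ?B. tensor u v pq * TD n pq z)"
    unfolding tdiff_Lin by (rule Lin_superset) (use fA fB sub in auto)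
  also have "\<dots> = (\<Sum>pq\<in>?A \<times> ?B. u (fst pq) * v (snd pq) * (d_gen n (fst pq) a * pt (snd pq) b
       + (-1) ^ r * (pt (fst pq) a * d_gen n (snd pq) b)))"
  proof (rule sum.cong[OF refl])
    fix p assume "p \<in> ?A \<times> ?B"
    then have "fst (fst p) = r" using assms(3) by auto
    then show "tensor u v p * TD n p z = u (fst p) * v (snd p) * (d_gen n (fst p) a * pt (snd p) b
       + (-1) ^ r * (pt (fst p) a * d_gen n (snd p) b))"
      by (simp add: TD_def tensor_def z ind_pt split: prod.splits)
  qed
  also have "\<dots> = (\<Sum>p\<in>?A. \<Sum>q\<in>?B. u p * v q * (d_gen n p a * pt q b
       + (-1) ^ r * (pt p a * d_gen n q b)))"
    unfolding sum.cartesian_product by (rule sum.cong) auto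
  also have "\<dots> = (\<Sum>p\<in>?A. u p * d_gen n p a) * (\<Sum>q\<in>?B. v q * pt q b)
      + (-1) ^ r * ((\<Sum>p\<in>?A. u p * pt p a) * (\<Sum>q\<in>?B. v q * d_gen n q b))"
  proof -
    have "(\<Sum>p\<in>?A. \<Sum>q\<in>?B. u p * v q * (d_gen n p a * pt q b + (-1) ^ r * (pt p a * d_gen n q b)))
      = (\<Sum>p\<in>?A. \<Sum>q\<in>?B. (u p * d_gen n p a) * (v q * pt q b))
      + (-1) ^ r * (\<Sum>p\<in>?A. \<Sum>q\<in>?B. (u p * pt p a) * (v q * d_gen n q b))"
      by (simp only: sum.distrib[symmetric] sum_distrib_left) (rule sum.cong[OF refl], rule sum.cong[OF refl], simp only: distrib_left mult_ac)
    then show ?thesis by (simp only: sum_product)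
  qed
  also have "\<dots> = dP n u a * v b + (-1) ^ r * (u a * dP n v b)"
    unfolding sv su by (simp add: dP_def)
  finally show "tdiff n (tensor u v) z = (tensor (dP n u) v + (\<lambda>z. (-1) ^ r * tensor u (dP n v) z)) z"
    by (simp add: tensor_def z)
qed



lemma core_identity:
  fixes T :: "'a::ab_group_add \<Rightarrow> 'a \<Rightarrow> 'b::ab_group_add"
    and X Y Y' Z :: "nat \<Rightarrow> 'a"
  assumes addL: "\<And>u v w. T (u + v) w = T u w + T v w"
    and addR: "\<And>u v w. T u (v + w) = T u v + T u w"
  shows "T (X 1) (\<Sum>i\<in>{1..m}. Y i + Y' i)
    + (\<Sum>i\<in>{1..m}. (\<Sum>j\<in>{1..<i}. T (X (Suc j) - X j) (Y i) - T (Y j + Y' j) (Z i - X i))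
                    + (\<Sum>j\<in>{1..<i}. T (X (Suc j) - X j) (Y' i) - T (Y j + Y' j) (X (Suc i) - Z i))
                    + (T (Z i - X i) (Y' i) - T (Y i) (X (Suc i) - Z i)))
    + T (\<Sum>i\<in>{1..m}. Y i + Y' i) (X (Suc m))
    = (\<Sum>i\<in>{1..m}. T (Y i) (Z i) + T (X i) (Y i) + T (Y' i) (X (Suc i)) + T (Z i) (Y' i))"
proof -
  have diffL: "\<And>u v w. T (u - v) w = T u w - T v w"
    by (metis addL add_diff_cancel eq_diff_eq)
  have diffR: "\<And>u v w. T u (v - w) = T u v - T u w"
    by (metis addR add_diff_cancel eq_diff_eq)
  have sumL: "\<And>f w I. T (\<Sum>j\<in>I. f j) w = (\<Sum>j\<in>I. T (f j) w)"
  proof -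
    fix f w and I :: "'c set"
    have z: "T 0 w = 0" using addL[of 0 0 w] by simp
    show "T (\<Sum>j\<in>I. f j) w = (\<Sum>j\<in>I. T (f j) w)"
      by (induction I rule: infinite_finite_induct) (auto simp: z addL)
  qed
  show ?thesis
  proof (induction m)
    case 0 then show ?case
      using addL[of 0 0 "X 1"] addR[of "X 1" 0 0] by simp
  next
    case (Suc m)
    let ?S = "\<Sum>i\<in>{1..m}. Y i + Y' i"
    let ?X1 = "X 1" and ?X' = "X (Suc m)" and ?X'' = "X (Suc (Suc m))"
    let ?Y = "Y (Suc m)" and ?Y' = "Y' (Suc m)" and ?Z = "Z (Suc m)"
    have iv: "{1..<Suc m} = {1..m}" by auto
    have tele: "(\<Sum>j\<in>{1..<Suc m}. X (Suc j) - X j) = ?X' - ?X1"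
      by (rule sum_Suc_diff') simp
    have s1: "(\<Sum>j\<in>{1..<Suc m}. T (X (Suc j) - X j) V - T (Y j + Y' j) W)
              = T (?X' - ?X1) V - T ?S W" for V W
    proof -
      have "(\<Sum>j\<in>{1..<Suc m}. T (X (Suc j) - X j) V - T (Y j + Y' j) W)
        = (\<Sum>j\<in>{1..<Suc m}. T (X (Suc j) - X j) V) - (\<Sum>j\<in>{1..<Suc m}. T (Y j + Y' j) W)"
        by (rule sum_subtractf)
      also have "\<dots> = T (\<Sum>j\<in>{1..<Suc m}. X (Suc j) - X j) V - T (\<Sum>j\<in>{1..<Suc m}. Y j + Y' j) W"
        by (simp only: sumL)
      also have "\<dots> = T (?X' - ?X1) V - T ?S W" by (subst tele) (simp only: iv)
      finally show ?thesis .
    qed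
    have body: "(\<Sum>j\<in>{1..<Suc m}. T (X (Suc j) - X j) ?Y - T (Y j + Y' j) (?Z - ?X'))
                    + (\<Sum>j\<in>{1..<Suc m}. T (X (Suc j) - X j) ?Y' - T (Y j + Y' j) (?X'' - ?Z))
                    + (T (?Z - ?X') ?Y' - T ?Y (?X'' - ?Z))
      = T (?X' - ?X1) ?Y - T ?S (?Z - ?X') + (T (?X' - ?X1) ?Y' - T ?S (?X'' - ?Z))
        + (T (?Z - ?X') ?Y' - T ?Y (?X'' - ?Z))"
      by (simp only: s1)
    have e1: "(\<Sum>i\<in>{1..Suc m}. Y i + Y' i) = ?S + (?Y + ?Y')" by simp
    show ?case
      unfolding e1 sum.cl_ivl_Suc if_not_P[OF not_less_eq[THEN iffD2], OF le0[THEN le_imp_less_Suc]]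
      apply (simp only: body)
      using Suc.IH
      apply (simp add: addL addR diffL diffR algebra_simps)
      done
  qed
qed



abbreviation Cn :: "nat \<Rightarrow> elt set" where "Cn n \<equiv> carrier (SG n)"

definition gd :: "nat \<Rightarrow> elt \<Rightarrow> nat \<times> elt \<times> nat \<Rightarrow> nat \<times> elt \<times> nat" where
  "gd n g t = (fst t, g \<otimes>\<^bsub>SG n\<^esub> fst (snd t), snd (snd t))"

definition inC :: "nat \<Rightarrow> (nat \<times> elt \<times> nat \<Rightarrow> int) \<Rightarrow> bool" where
  "inC n f \<longleftrightarrow> (\<forall>t. f t \<noteq> 0 \<longrightarrow> fst (snd t) \<in> Cn n)"
definition inC2 :: "nat \<Rightarrow> tchain \<Rightarrow> bool" where
  "inC2 n F \<longleftrightarrow> (\<forall>z. F z \<noteq> 0 \<longrightarrow> fst (snd (fst z)) \<in> Cn n \<and> fst (snd (snd z)) \<in> Cn n)"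

lemma act_pt: assumes "g \<in> Cn n" "h \<in> Cn n"
  shows "act n g (pt (k, h, b)) = pt (k, g \<otimes>\<^bsub>SG n\<^esub> h, b)"
proof -
  have "\<And>x. x \<in> Cn n \<Longrightarrow> (inv\<^bsub>SG n\<^esub> g \<otimes>\<^bsub>SG n\<^esub> x = h) = (x = g \<otimes>\<^bsub>SG n\<^esub> h)"
    using assms by (metis sg.inv_closed sg.inv_solve_left)
  then show ?thesis using assms by (auto simp: act_def pt_def fun_eq_iff)
qed

lemma act_add: "act n g (u + v) = act n g u + act n g v"
  by (auto simp: act_def fun_eq_iff)
lemma act_diff: "act n g (u - v) = act n g u - act n g v"
  by (auto simp: act_def fun_eq_iff)
lemma act_zero: "act n g 0 = 0" "act n g (\<lambda>_. 0) = 0"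
  by (auto simp: act_def fun_eq_iff)
lemma act_sum: "act n g (\<Sum>i\<in>I. F i) = (\<Sum>i\<in>I. act n g (F i))"
  by (rule ext) (auto simp: act_def sum_fun_apply)
lemma act_comp: assumes "g \<in> Cn n" "h \<in> Cn n"
  shows "act n g (act n h f) = act n (g \<otimes>\<^bsub>SG n\<^esub> h) f"
  using assms by (auto simp: act_def fun_eq_iff sg.inv_mult_group sg.m_assoc)
lemma act_one: assumes "inC n f" shows "act n (one (SG n)) f = f"
proof (rule ext)
  fix t :: "nat \<times> elt \<times> nat"
  obtain k h b where t: "t = (k, h, b)" by (metis prod.exhaust)
  show "act n (one (SG n)) f t = f t"
    using assms[unfolded inC_def, rule_format, of t] by (auto simp: t act_def)
qed

lemma tact_pt: assumes "g \<in> Cn n" "h \<in> Cn n" "h' \<in> Cn n"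
  shows "tact n g (pt ((k, h, b), (k', h', b'))) = pt ((k, g \<otimes>\<^bsub>SG n\<^esub> h, b), (k', g \<otimes>\<^bsub>SG n\<^esub> h', b'))"
proof -
  have e: "\<And>x h. h \<in> Cn n \<Longrightarrow> x \<in> Cn n \<Longrightarrow> (inv\<^bsub>SG n\<^esub> g \<otimes>\<^bsub>SG n\<^esub> x = h) = (x = g \<otimes>\<^bsub>SG n\<^esub> h)"
    using assms by (metis sg.inv_closed sg.inv_solve_left)
  show ?thesis using assms e[of h] e[of h'] by (auto simp: tact_def pt_def fun_eq_iff)
qed

lemma tact_add: "tact n g (F + G) = tact n g F + tact n g G"
  by (auto simp: tact_def fun_eq_iff)
lemma tact_zero: "tact n g 0 = 0"
  by (auto simp: tact_def fun_eq_iff)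
lemma tact_comp: assumes "g \<in> Cn n" "h \<in> Cn n"
  shows "tact n g (tact n h F) = tact n (g \<otimes>\<^bsub>SG n\<^esub> h) F"
  using assms by (auto simp: tact_def fun_eq_iff sg.inv_mult_group sg.m_assoc)
lemma tact_one: assumes "inC2 n F" shows "tact n (one (SG n)) F = F"
proof (rule ext)
  fix z :: "(nat \<times> elt \<times> nat) \<times> (nat \<times> elt \<times> nat)"
  obtain k h b k' h' b' where z: "z = ((k, h, b), (k', h', b'))" by (metis prod.exhaust)
  show "tact n (one (SG n)) F z = F z"
    using assms[unfolded inC2_def, rule_format, of z] by (auto simp: z tact_def)
qed
lemma tact_tensor: "tact n g (tensor u v) = tensor (act n g u) (act n g v)"
  by (auto simp: tact_def tensor_def act_def fun_eq_iff)
lemma tact_Lin: "tact n g (Lin D f) = Lin (\<lambda>t. tact n g (D t)) f"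
  by (auto simp: tact_def Lin_def fun_eq_iff)
lemma tact_lam: "tact n g (\<lambda>z. A z + c * B z) = (\<lambda>z. tact n g A z + c * tact n g B z)"
  by (auto simp: tact_def fun_eq_iff)

lemma gd_inv: assumes "g \<in> Cn n" "fst (snd s) \<in> Cn n"
  shows "act n g f (gd n g s) = f s"
proof -
  obtain k h b where s: "s = (k, h, b)" by (metis prod.exhaust)
  show ?thesis using assms by (simp add: s act_def gd_def sg.m_assoc[symmetric])
qed

lemma Lin_act: assumes g: "g \<in> Cn n" and "fs f" "inC n f"
  shows "Lin D (act n g f) = Lin (\<lambda>t. D (gd n g t)) f"
proof -
  let ?S = "{t. f t \<noteq> 0}"
  have sC: "\<And>s. s \<in> ?S \<Longrightarrow> fst (snd s) \<in> Cn n" using assms(3) unfolding inC_def by blast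
  have supp: "{t. act n g f t \<noteq> 0} = gd n g ` ?S"
  proof
    show "{t. act n g f t \<noteq> 0} \<subseteq> gd n g ` ?S"
    proof
      fix t assume "t \<in> {t. act n g f t \<noteq> 0}"
      then obtain k h b where t: "t = (k, h, b)" "h \<in> Cn n"
          "f (k, inv\<^bsub>SG n\<^esub> g \<otimes>\<^bsub>SG n\<^esub> h, b) \<noteq> 0"
        by (cases t) (auto simp: act_def split: if_splits)
      have "t = gd n g (k, inv\<^bsub>SG n\<^esub> g \<otimes>\<^bsub>SG n\<^esub> h, b)"
        using t g by (simp add: gd_def sg.m_assoc[symmetric])
      then show "t \<in> gd n g ` ?S" using t by auto
    qed
    show "gd n g ` ?S \<subseteq> {t. act n g f t \<noteq> 0}" using gd_inv[OF g] sC by auto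
  qed
  have inj: "inj_on (gd n g) ?S"
  proof (rule inj_onI)
    fix s s' assume "s \<in> ?S" "s' \<in> ?S" "gd n g s = gd n g s'"
    then show "s = s'" using sC[of s] sC[of s'] g
      by (cases s, cases s') (auto simp: gd_def)
  qed
  show ?thesis
  proof (rule ext)
    fix z
    have "Lin D (act n g f) z = (\<Sum>t\<in>gd n g ` ?S. act n g f t * D t z)"
      by (simp add: Lin_def supp)
    also have "\<dots> = (\<Sum>s\<in>?S. act n g f (gd n g s) * D (gd n g s) z)"
      by (rule sum.reindex[OF inj, unfolded comp_def])
    also have "\<dots> = (\<Sum>s\<in>?S. f s * D (gd n g s) z)"
      using gd_inv[OF g] sC by simp
    finally show "Lin D (act n g f) z = Lin (\<lambda>t. D (gd n g t)) f z" by (simp add: Lin_def)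
  qed
qed



definition gd2 :: "nat \<Rightarrow> elt \<Rightarrow> _ \<Rightarrow> _" where
  "gd2 n g pq = (gd n g (fst pq), gd n g (snd pq))"

lemma gd2_inv: assumes "g \<in> Cn n" "fst (snd (fst z)) \<in> Cn n" "fst (snd (snd z)) \<in> Cn n"
  shows "tact n g F (gd2 n g z) = F z"
proof -
  obtain k h b k' h' b' where z: "z = ((k, h, b), (k', h', b'))" by (metis prod.exhaust)
  show ?thesis using assms by (simp add: z tact_def gd2_def gd_def sg.m_assoc[symmetric])
qed

lemma Lin_tact: assumes g: "g \<in> Cn n" and "fs F" "inC2 n F"
  shows "Lin D (tact n g F) = Lin (\<lambda>t. D (gd2 n g t)) F"
proof -
  let ?S = "{t. F t \<noteq> 0}"
  have sC: "\<And>s. s \<in> ?S \<Longrightarrow> fst (snd (fst s)) \<in> Cn n \<and> fst (snd (snd s)) \<in> Cn n"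
    using assms(3) unfolding inC2_def by blast
  have supp: "{t. tact n g F t \<noteq> 0} = gd2 n g ` ?S"
  proof
    show "{t. tact n g F t \<noteq> 0} \<subseteq> gd2 n g ` ?S"
    proof
      fix t assume t0: "t \<in> {t. tact n g F t \<noteq> 0}"
      obtain k h b k' h' b' where t: "t = ((k, h, b), (k', h', b'))" by (metis prod.exhaust)
      have hh: "h \<in> Cn n" "h' \<in> Cn n"
          "F ((k, inv\<^bsub>SG n\<^esub> g \<otimes>\<^bsub>SG n\<^esub> h, b), (k', inv\<^bsub>SG n\<^esub> g \<otimes>\<^bsub>SG n\<^esub> h', b')) \<noteq> 0"
        using t0 by (auto simp: t tact_def split: if_splits)
      have "t = gd2 n g ((k, inv\<^bsub>SG n\<^esub> g \<otimes>\<^bsub>SG n\<^esub> h, b), (k', inv\<^bsub>SG n\<^esub> g \<otimes>\<^bsub>SG n\<^esub> h', b'))"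
        using hh g by (simp add: t gd2_def gd_def sg.m_assoc[symmetric])
      then show "t \<in> gd2 n g ` ?S" using hh by auto
    qed
    show "gd2 n g ` ?S \<subseteq> {t. tact n g F t \<noteq> 0}" using gd2_inv[OF g] sC by auto
  qed
  have inj: "inj_on (gd2 n g) ?S"
  proof (rule inj_onI)
    fix s s' assume a: "s \<in> ?S" "s' \<in> ?S" "gd2 n g s = gd2 n g s'"
    obtain k h b k' h' b' where s: "s = ((k, h, b), (k', h', b'))" by (metis prod.exhaust)
    obtain l e c l' e' c' where s': "s' = ((l, e, c), (l', e', c'))" by (metis prod.exhaust)
    show "s = s'" using sC[OF a(1)] sC[OF a(2)] a(3) g
      by (auto simp: s s' gd2_def gd_def)
  qed
  show ?thesis
  proof (rule ext)
    fix z
    have "Lin D (tact n g F) z = (\<Sum>t\<in>gd2 n g ` ?S. tact n g F t * D t z)"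
      by (simp add: Lin_def supp)
    also have "\<dots> = (\<Sum>s\<in>?S. tact n g F (gd2 n g s) * D (gd2 n g s) z)"
      by (rule sum.reindex[OF inj, unfolded comp_def])
    also have "\<dots> = (\<Sum>s\<in>?S. F s * D (gd2 n g s) z)"
      using gd2_inv[OF g] sC by simp
    finally show "Lin D (tact n g F) z = Lin (\<lambda>t. D (gd2 n g t)) F z" by (simp add: Lin_def)
  qed
qed

lemma d_gen_gd: assumes "g \<in> Cn n" "fst (snd p) \<in> Cn n"
  shows "d_gen n (gd n g p) = act n g (d_gen n p)"
proof -
  obtain k h b where p: "p = (k, h, b)" by (metis prod.exhaust)
  show ?thesis using assms by (simp add: p gd_def d_gen_def act_comp act_zero zero_fun_def)
qed

lemma ind_gd: assumes "g \<in> Cn n" "fst (snd p) \<in> Cn n"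
  shows "ind (gd n g p) = act n g (ind p)"
proof -
  obtain k h b where p: "p = (k, h, b)" by (metis prod.exhaust)
  show ?thesis using assms by (simp add: p gd_def ind_pt act_pt)
qed

lemma fst_gd[simp]: "fst (gd n g p) = fst p" by (simp add: gd_def)

lemma TD_gd: assumes "g \<in> Cn n" "fst (snd (fst pq)) \<in> Cn n" "fst (snd (snd pq)) \<in> Cn n"
  shows "TD n (gd2 n g pq) = tact n g (TD n pq)"
  unfolding TD_def gd2_def tact_lam using assms
  by (simp add: d_gen_gd ind_gd tact_tensor)

lemma tdiff_tact: assumes g: "g \<in> Cn n" and "fs F" "inC2 n F"
  shows "tdiff n (tact n g F) = tact n g (tdiff n F)"
proof -
  have "tdiff n (tact n g F) = Lin (\<lambda>t. TD n (gd2 n g t)) F"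
    unfolding tdiff_Lin by (rule Lin_tact[OF assms])
  also have "\<dots> = Lin (\<lambda>t. tact n g (TD n t)) F"
    unfolding Lin_def
  proof (rule ext, rule sum.cong[OF refl])
    fix z t assume "t \<in> {t. F t \<noteq> 0}"
    then have "fst (snd (fst t)) \<in> Cn n" "fst (snd (snd t)) \<in> Cn n"
      using assms(3) unfolding inC2_def by blast+
    then show "F t * TD n (gd2 n g t) z = F t * tact n g (TD n t) z" using TD_gd g by simp
  qed
  also have "\<dots> = tact n g (tdiff n F)" unfolding tdiff_Lin tact_Lin ..
  finally show ?thesis .
qed



definition spred :: "('a \<Rightarrow> bool) \<Rightarrow> ('a \<Rightarrow> int) \<Rightarrow> bool" where
  "spred P F \<longleftrightarrow> (\<forall>z. F z \<noteq> 0 \<longrightarrow> P z)"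

lemma spred_pt: "P a \<Longrightarrow> spred P (pt a)" by (simp add: spred_def pt_def)
lemma spred_add: "spred P F \<Longrightarrow> spred P G \<Longrightarrow> spred P (F + G)"
  unfolding spred_def by (metis add.right_neutral plus_fun_apply)
lemma spred_diff: "spred P F \<Longrightarrow> spred P G \<Longrightarrow> spred P (F - G)"
  unfolding spred_def by (metis diff_self minus_apply)
lemma spred_zero: "spred P 0" "spred P (\<lambda>_. 0)" by (auto simp: spred_def)
lemma spred_sum: "(\<And>i. i \<in> I \<Longrightarrow> spred P (F i)) \<Longrightarrow> spred P (\<Sum>i\<in>I. F i)"
proof (induction I rule: infinite_finite_induct)
  case (insert x I)
  have "spred P (F x + sum F I)" by (rule spred_add) (use insert in auto)
  moreover have e: "sum F (insert x I) = F x + sum F I" using insert(1,2) by (rule sum.insert)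
  ultimately show ?case by (simp only: e)
qed (auto simp: spred_zero)
lemma spred_tensor: "spred Q u \<Longrightarrow> spred R v \<Longrightarrow> spred (\<lambda>z. Q (fst z) \<and> R (snd z)) (tensor u v)"
  by (auto simp: spred_def tensor_def)
lemma spred_mono: "spred P F \<Longrightarrow> (\<And>z. P z \<Longrightarrow> Q z) \<Longrightarrow> spred Q F"
  by (auto simp: spred_def)
lemma spred_Lin: "(\<And>t. F t \<noteq> 0 \<Longrightarrow> spred P (D t)) \<Longrightarrow> spred P (Lin D F)"
  unfolding spred_def using supp_Lin by metis

abbreviation homc :: "nat \<Rightarrow> nat \<Rightarrow> chain \<Rightarrow> bool" where
  "homc n k \<equiv> spred (\<lambda>p. fst p = k \<and> valid n p)"
abbreviation thomc :: "nat \<Rightarrow> nat \<Rightarrow> tchain \<Rightarrow> bool" where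
  "thomc n m \<equiv> spred (\<lambda>z. fst (fst z) + fst (snd z) = m \<and> valid n (fst z) \<and> valid n (snd z))"

lemma in_P_iff: "in_P n k f \<longleftrightarrow> fs f \<and> homc n k f" by (auto simp: in_P_def spred_def)
lemma in_T_iff: "in_T n m F \<longleftrightarrow> fs F \<and> thomc n m F" by (auto simp: in_T_def spred_def)

lemma thom_tensor: "homc n k u \<Longrightarrow> homc n k' v \<Longrightarrow> thomc n (k + k') (tensor u v)"
  by (rule spred_mono[OF spred_tensor]) auto

lemma hom_inC: "homc n k f \<Longrightarrow> inC n f" by (auto simp: spred_def inC_def valid_def)
lemma thom_inC2: "thomc n m F \<Longrightarrow> inC2 n F" by (auto simp: spred_def inC2_def valid_def)

lemma hom_pt: "h \<in> Cn n \<Longrightarrow> b \<in> basis_set n k \<Longrightarrow> homc n k (pt (k, h, b))"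
  by (rule spred_pt) (simp add: valid_def)

lemma thom_tact: assumes "g \<in> Cn n" "thomc n m F" shows "thomc n m (tact n g F)"
  unfolding spred_def
proof (intro allI impI)
  fix z assume nz: "tact n g F z \<noteq> 0"
  obtain k h b k' h' b' where z: "z = ((k, h, b), (k', h', b'))" by (metis prod.exhaust)
  from nz have "h \<in> Cn n" "h' \<in> Cn n"
    "F ((k, inv\<^bsub>SG n\<^esub> g \<otimes>\<^bsub>SG n\<^esub> h, b), (k', inv\<^bsub>SG n\<^esub> g \<otimes>\<^bsub>SG n\<^esub> h', b')) \<noteq> 0"
    by (auto simp: z tact_def split: if_splits)
  then show "fst (fst z) + fst (snd z) = m \<and> valid n (fst z) \<and> valid n (snd z)"
    using assms(2) unfolding spred_def by (fastforce simp: z valid_def)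
qed

lemma fs_tact: assumes g: "g \<in> Cn n" and "fs F" "inC2 n F" shows "fs (tact n g F)"
proof -
  let ?S = "{t. F t \<noteq> 0}"
  have "{t. tact n g F t \<noteq> 0} \<subseteq> gd2 n g ` ?S"
  proof
    fix t assume t0: "t \<in> {t. tact n g F t \<noteq> 0}"
    obtain k h b k' h' b' where t: "t = ((k, h, b), (k', h', b'))" by (metis prod.exhaust)
    have hh: "h \<in> Cn n" "h' \<in> Cn n"
        "F ((k, inv\<^bsub>SG n\<^esub> g \<otimes>\<^bsub>SG n\<^esub> h, b), (k', inv\<^bsub>SG n\<^esub> g \<otimes>\<^bsub>SG n\<^esub> h', b')) \<noteq> 0"
      using t0 by (auto simp: t tact_def split: if_splits)
    have "t = gd2 n g ((k, inv\<^bsub>SG n\<^esub> g \<otimes>\<^bsub>SG n\<^esub> h, b), (k', inv\<^bsub>SG n\<^esub> g \<otimes>\<^bsub>SG n\<^esub> h', b'))"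
      using hh g by (simp add: t gd2_def gd_def sg.m_assoc[symmetric])
    then show "t \<in> gd2 n g ` ?S" using hh by auto
  qed
  then show ?thesis using assms(2) finite_surj by blast
qed

definition D11 :: "nat \<Rightarrow> tchain" where
  "D11 n = (\<Sum>i\<in>{1..n}.
            (\<Sum>j\<in>{1..<i}. tensor (act n (sqprod n j) (ygen n j + act n (gen n j) (ygen n j)))
                                  (act n (sqprod n i) (ygen n i)))
          + (\<Sum>j\<in>{1..<i}. tensor (act n (sqprod n j) (ygen n j + act n (gen n j) (ygen n j)))
                                  (act n (mult (surface_group n) (sqprod n i) (gen n i)) (ygen n i)))
          + tensor (act n (sqprod n i) (ygen n i))
                   (act n (mult (surface_group n) (sqprod n i) (gen n i)) (ygen n i)))"

definition Dw :: "nat \<Rightarrow> tchain" where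
  "Dw n = tensor (xgen n) (wgen n) + D11 n + tensor (wgen n) (xgen n)"

definition Dg :: "nat \<Rightarrow> nat \<times> elt \<times> nat \<Rightarrow> tchain" where
  "Dg n t = (case t of (k, g, b) \<Rightarrow>
     if k = 0 then pt (t, t)
     else if k = 1 then pt ((1, g, b), (0, g \<otimes>\<^bsub>SG n\<^esub> gen n b, 0)) + pt ((0, g, 0), (1, g, b))
     else if k = 2 then tact n g (Dw n)
     else 0)"

definition Delta :: "nat \<Rightarrow> nat \<Rightarrow> chain \<Rightarrow> tchain" where
  "Delta n k f = Lin (Dg n) f"

definition Yv where "Yv n i = pt (1::nat, sqprod n i, i)"
definition Y'v where "Y'v n i = pt (1::nat, sqprod n i \<otimes>\<^bsub>SG n\<^esub> gen n i, i)"
definition Xv where "Xv n i = pt (0::nat, sqprod n i, 0::nat)"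
definition Zv where "Zv n i = pt (0::nat, sqprod n i \<otimes>\<^bsub>SG n\<^esub> gen n i, 0::nat)"

lemma xgen_pt: "xgen n = pt (0, one (SG n), 0)" by (simp add: xgen_def gelt_pt)
lemma ygen_pt: "ygen n i = pt (1, one (SG n), i)" by (simp add: ygen_def gelt_pt)
lemma wgen_pt: "wgen n = pt (2, one (SG n), 0)" by (simp add: wgen_def gelt_pt)

context
  fixes n i :: nat
  assumes i: "1 \<le> i" "i \<le> n"
begin

lemma sc: "sqprod n i \<in> Cn n" using sqprod_carrier i by simp
lemma gc: "gen n i \<in> Cn n" using gen_carrier i by simp
lemma sgc: "sqprod n i \<otimes>\<^bsub>SG n\<^esub> gen n i \<in> Cn n" using sc gc by simp

lemma act_Y: "act n (sqprod n i) (ygen n i) = Yv n i"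
  using sc by (simp add: ygen_pt act_pt Yv_def)
lemma act_Y': "act n (sqprod n i \<otimes>\<^bsub>SG n\<^esub> gen n i) (ygen n i) = Y'v n i"
  using sgc by (simp add: ygen_pt act_pt Y'v_def)
lemma act_C: "act n (sqprod n i) (ygen n i + act n (gen n i) (ygen n i)) = Yv n i + Y'v n i"
  using sc gc by (simp add: act_add act_comp act_Y act_Y')

lemma hom_Y: "homc n 1 (Yv n i)" "homc n 1 (Y'v n i)"
  using i sc sgc by (auto simp: Yv_def Y'v_def basis_set_def intro!: hom_pt)
lemma hom_X: "homc n 0 (Xv n i)" "homc n 0 (Zv n i)"
  using i sc sgc by (auto simp: Xv_def Zv_def basis_set_def intro!: hom_pt)

lemma dP_pt: "dP n (pt t) = d_gen n t" by (simp add: dP_Lin Lin_pt)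

lemma dP_Y: "dP n (Yv n i) = Zv n i - Xv n i"
  using sc gc by (simp add: dP_pt Yv_def d_gen_def gelt_pt xgen_pt act_diff act_pt Zv_def Xv_def)
lemma dP_Y': "dP n (Y'v n i) = Xv n (Suc i) - Zv n i"
  using sgc gc i by (simp add: dP_pt Y'v_def d_gen_def gelt_pt xgen_pt act_diff act_pt Zv_def Xv_def sqprod_Suc)
lemma dP_C: "dP n (Yv n i + Y'v n i) = Xv n (Suc i) - Xv n i"
proof -
  have "dP n (Yv n i + Y'v n i) = dP n (Yv n i) + dP n (Y'v n i)"
    unfolding dP_Lin by (rule Lin_add) (simp_all add: Yv_def Y'v_def fs_pt)
  then show ?thesis by (simp only: dP_Y dP_Y') simp
qed

lemma Dg_Y: "Dg n (1, sqprod n i, i) = tensor (Yv n i) (Zv n i) + tensor (Xv n i) (Yv n i)"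
  by (simp add: Dg_def Yv_def Zv_def Xv_def tensor_pt)
lemma Dg_Y': "Dg n (1, sqprod n i \<otimes>\<^bsub>SG n\<^esub> gen n i, i) = tensor (Y'v n i) (Xv n (Suc i)) + tensor (Zv n i) (Y'v n i)"
  using i by (simp add: Dg_def Y'v_def Zv_def Xv_def tensor_pt sqprod_Suc)

end



lemma hom_deg: "homc n k u \<Longrightarrow> u p \<noteq> 0 \<Longrightarrow> fst p = k" unfolding spred_def by blast

lemma thom_t11: assumes "homc n 1 u" "homc n 1 v" shows "thomc n 2 (tensor u v)"
  using thom_tensor[OF assms] by (simp add: numeral_2_eq_2)
lemma thom_t02: assumes "homc n 0 u" "homc n 2 v" shows "thomc n 2 (tensor u v)"
  using thom_tensor[OF assms] by (simp add: numeral_2_eq_2)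
lemma thom_t20: assumes "homc n 2 u" "homc n 0 v" shows "thomc n 2 (tensor u v)"
  using thom_tensor[OF assms] by (simp add: numeral_2_eq_2)

lemma tdiff_T0: assumes "homc n 0 u" "fs u" "fs v"
  shows "tdiff n (tensor u v) = tensor (dP n u) v + tensor u (dP n v)"
proof -
  have "\<And>p. u p \<noteq> 0 \<Longrightarrow> fst p = 0" using hom_deg[OF assms(1)] by blast
  from tdiff_tensor[OF assms(2,3) this, of n] show ?thesis by (auto simp: fun_eq_iff)
qed

lemma tdiff_T1: assumes "homc n 1 u" "fs u" "fs v"
  shows "tdiff n (tensor u v) = tensor (dP n u) v - tensor u (dP n v)"
proof -
  have "\<And>p. u p \<noteq> 0 \<Longrightarrow> fst p = 1" using hom_deg[OF assms(1)] by blast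
  from tdiff_tensor[OF assms(2,3) this, of n] show ?thesis by (auto simp: fun_eq_iff)
qed

lemma tdiff_T2: assumes "homc n 2 u" "fs u" "fs v"
  shows "tdiff n (tensor u v) = tensor (dP n u) v + tensor u (dP n v)"
proof -
  have "\<And>p. u p \<noteq> 0 \<Longrightarrow> fst p = 2" using hom_deg[OF assms(1)] by blast
  from tdiff_tensor[OF assms(2,3) this, of n] show ?thesis by (auto simp: fun_eq_iff)
qed

lemma tdiff_add: "fs F \<Longrightarrow> fs G \<Longrightarrow> tdiff n (F + G) = tdiff n F + tdiff n G"
  unfolding tdiff_Lin by (rule Lin_add)
lemma tdiff_sum: "finite I \<Longrightarrow> (\<And>i. i \<in> I \<Longrightarrow> fs (F i)) \<Longrightarrow> tdiff n (\<Sum>i\<in>I. F i) = (\<Sum>i\<in>I. tdiff n (F i))"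
  unfolding tdiff_Lin by (rule Lin_sum)

lemma smul_grelt2: assumes "a \<in> Cn n" "b \<in> Cn n"
  shows "smul n (grelt a + grelt b) f = act n a f + act n b f"
proof (cases "a = b")
  case True
  have "{g \<in> Cn n. (grelt a + grelt b) g \<noteq> 0} = {a}" using True assms by (auto simp: grelt_def)
  then show ?thesis using True by (auto simp: smul_def grelt_def fun_eq_iff)
next
  case False
  have "{g \<in> Cn n. (grelt a + grelt b) g \<noteq> 0} = {a, b}" using False assms by (auto simp: grelt_def)
  then show ?thesis using False by (auto simp: smul_def grelt_def fun_eq_iff)
qed

definition dw0 :: "nat \<Rightarrow> chain" where
  "dw0 n = (\<Sum>i\<in>{1..n}. smul n (fox n i (relator n)) (ygen n i))"

lemma dw0_eq: "dw0 n = (\<Sum>i\<in>{1..n}. Yv n i + Y'v n i)"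
  unfolding dw0_def
proof (rule sum.cong[OF refl])
  fix i assume "i \<in> {1..n}"
  then have i: "1 \<le> i" "i \<le> n" by auto
  show "smul n (fox n i (relator n)) (ygen n i) = Yv n i + Y'v n i"
    using i sc[OF i] sgc[OF i] by (simp add: fox_relator smul_grelt2 act_Y act_Y')
qed

lemma fs_YY: "fs (Yv n i)" "fs (Y'v n i)" "fs (Xv n i)" "fs (Zv n i)"
  by (simp_all add: Yv_def Y'v_def Xv_def Zv_def fs_pt)
lemma fs_C: "fs (Yv n i + Y'v n i)" by (intro fs_add fs_YY)

lemma hom_C: "1 \<le> i \<Longrightarrow> i \<le> n \<Longrightarrow> homc n 1 (Yv n i + Y'v n i)"
  by (intro spred_add hom_Y)

lemma fs_dw: "fs (\<Sum>i\<in>{1..n}. Yv n i + Y'v n i)" by (intro fs_sum fs_C)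
lemma hom_dw: "homc n 1 (\<Sum>i\<in>{1..n}. Yv n i + Y'v n i)" by (intro spred_sum hom_C) auto

lemma D11_pt: "D11 n = (\<Sum>i\<in>{1..n}.
     (\<Sum>j\<in>{1..<i}. tensor (Yv n j + Y'v n j) (Yv n i))
   + (\<Sum>j\<in>{1..<i}. tensor (Yv n j + Y'v n j) (Y'v n i))
   + tensor (Yv n i) (Y'v n i))"
  unfolding D11_def
proof (rule sum.cong[OF refl])
  fix i assume "i \<in> {1..n}"
  then have i: "1 \<le> i" "i \<le> n" by auto
  have cj: "\<And>j. j \<in> {1..<i} \<Longrightarrow> act n (sqprod n j) (ygen n j + act n (gen n j) (ygen n j)) = Yv n j + Y'v n j"
    using i by (intro act_C) auto
  show "(\<Sum>j\<in>{1..<i}. tensor (act n (sqprod n j) (ygen n j + act n (gen n j) (ygen n j)))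
                                  (act n (sqprod n i) (ygen n i)))
          + (\<Sum>j\<in>{1..<i}. tensor (act n (sqprod n j) (ygen n j + act n (gen n j) (ygen n j)))
                                  (act n (mult (surface_group n) (sqprod n i) (gen n i)) (ygen n i)))
          + tensor (act n (sqprod n i) (ygen n i))
                   (act n (mult (surface_group n) (sqprod n i) (gen n i)) (ygen n i)) =
     (\<Sum>j\<in>{1..<i}. tensor (Yv n j + Y'v n j) (Yv n i))
   + (\<Sum>j\<in>{1..<i}. tensor (Yv n j + Y'v n j) (Y'v n i))
   + tensor (Yv n i) (Y'v n i)"
    using cj by (simp add: act_Y[OF i] act_Y'[OF i])
qed

lemma hom_xw: "homc n 0 (xgen n)" "homc n 2 (wgen n)"
  by (auto simp: xgen_pt wgen_pt basis_set_def intro!: hom_pt)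
lemma fs_xw: "fs (xgen n)" "fs (wgen n)" by (simp_all add: xgen_pt wgen_pt fs_pt)

lemma thom_D11: "thomc n 2 (D11 n)"
  unfolding D11_pt
  by (intro spred_add spred_sum thom_t11 hom_C hom_Y) auto

lemma fs_D11: "fs (D11 n)"
  unfolding D11_pt by (intro fs_add fs_sum fs_tensor fs_C fs_YY)

lemma thom_Dw: "thomc n 2 (Dw n)"
  unfolding Dw_def
  by (intro spred_add thom_D11 thom_t02 thom_t20 hom_xw)

lemma fs_Dw: "fs (Dw n)"
  unfolding Dw_def by (intro fs_add fs_D11 fs_tensor fs_xw)



lemma dP_x: "dP n (xgen n) = 0"
  by (simp add: xgen_pt dP_Lin Lin_pt d_gen_def zero_fun_def)

lemma dP_w: "dP n (wgen n) = (\<Sum>i\<in>{1..n}. Yv n i + Y'v n i)"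
proof -
  have "dP n (wgen n) = act n (one (SG n)) (dw0 n)"
    by (simp add: wgen_pt dP_Lin Lin_pt d_gen_def dw0_def)
  also have "\<dots> = dw0 n" by (rule act_one[OF hom_inC[OF hom_dw[unfolded dw0_eq[symmetric]]]])
  finally show ?thesis by (simp add: dw0_eq)
qed

lemma Xv_1: "Xv n 1 = xgen n" unfolding Xv_def xgen_pt sqprod_1 ..
lemma Xv_last: "Xv n (Suc n) = xgen n" by (simp add: Xv_def xgen_pt sqprod_last)

lemma tdiff_D11: "tdiff n (D11 n) = (\<Sum>i\<in>{1..n}.
     (\<Sum>j\<in>{1..<i}. tensor (Xv n (Suc j) - Xv n j) (Yv n i) - tensor (Yv n j + Y'v n j) (Zv n i - Xv n i))
   + (\<Sum>j\<in>{1..<i}. tensor (Xv n (Suc j) - Xv n j) (Y'v n i) - tensor (Yv n j + Y'v n j) (Xv n (Suc i) - Zv n i))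
   + (tensor (Zv n i - Xv n i) (Y'v n i) - tensor (Yv n i) (Xv n (Suc i) - Zv n i)))"
  unfolding D11_pt
proof (subst tdiff_sum, simp, intro fs_add fs_sum fs_tensor fs_C fs_YY, rule sum.cong[OF refl])
  fix i assume "i \<in> {1..n}"
  then have i: "1 \<le> i" "i \<le> n" by auto
  have j: "\<And>j. j \<in> {1..<i} \<Longrightarrow> 1 \<le> j \<and> j \<le> n" using i by auto
  have f1: "fs (\<Sum>j\<in>{1..<i}. tensor (Yv n j + Y'v n j) (Yv n i))"
    and f2: "fs (\<Sum>j\<in>{1..<i}. tensor (Yv n j + Y'v n j) (Y'v n i))"
    and f3: "fs (tensor (Yv n i) (Y'v n i))"
    by (intro fs_sum fs_tensor fs_C fs_YY)+
  have s1: "tdiff n (\<Sum>j\<in>{1..<i}. tensor (Yv n j + Y'v n j) (Yv n i))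
     = (\<Sum>j\<in>{1..<i}. tensor (Xv n (Suc j) - Xv n j) (Yv n i) - tensor (Yv n j + Y'v n j) (Zv n i - Xv n i))"
  proof (subst tdiff_sum, simp, intro fs_tensor fs_C fs_YY, rule sum.cong[OF refl])
    fix j assume "j \<in> {1..<i}"
    then have jj: "1 \<le> j" "j \<le> n" using j by auto
    show "tdiff n (tensor (Yv n j + Y'v n j) (Yv n i)) = tensor (Xv n (Suc j) - Xv n j) (Yv n i) - tensor (Yv n j + Y'v n j) (Zv n i - Xv n i)"
      unfolding tdiff_T1[OF hom_C[OF jj] fs_C fs_YY(1)] dP_C[OF jj] dP_Y[OF i] ..
  qed
  have s2: "tdiff n (\<Sum>j\<in>{1..<i}. tensor (Yv n j + Y'v n j) (Y'v n i))
     = (\<Sum>j\<in>{1..<i}. tensor (Xv n (Suc j) - Xv n j) (Y'v n i) - tensor (Yv n j + Y'v n j) (Xv n (Suc i) - Zv n i))"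
  proof (subst tdiff_sum, simp, intro fs_tensor fs_C fs_YY, rule sum.cong[OF refl])
    fix j assume "j \<in> {1..<i}"
    then have jj: "1 \<le> j" "j \<le> n" using j by auto
    show "tdiff n (tensor (Yv n j + Y'v n j) (Y'v n i)) = tensor (Xv n (Suc j) - Xv n j) (Y'v n i) - tensor (Yv n j + Y'v n j) (Xv n (Suc i) - Zv n i)"
      unfolding tdiff_T1[OF hom_C[OF jj] fs_C fs_YY(2)] dP_C[OF jj] dP_Y'[OF i] ..
  qed
  have s3: "tdiff n (tensor (Yv n i) (Y'v n i)) = tensor (Zv n i - Xv n i) (Y'v n i) - tensor (Yv n i) (Xv n (Suc i) - Zv n i)"
    unfolding tdiff_T1[OF hom_Y(1)[OF i] fs_YY(1) fs_YY(2)] dP_Y[OF i] dP_Y'[OF i] ..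
  show "tdiff n ((\<Sum>j\<in>{1..<i}. tensor (Yv n j + Y'v n j) (Yv n i))
      + (\<Sum>j\<in>{1..<i}. tensor (Yv n j + Y'v n j) (Y'v n i)) + tensor (Yv n i) (Y'v n i)) =
     (\<Sum>j\<in>{1..<i}. tensor (Xv n (Suc j) - Xv n j) (Yv n i) - tensor (Yv n j + Y'v n j) (Zv n i - Xv n i))
   + (\<Sum>j\<in>{1..<i}. tensor (Xv n (Suc j) - Xv n j) (Y'v n i) - tensor (Yv n j + Y'v n j) (Xv n (Suc i) - Zv n i))
   + (tensor (Zv n i - Xv n i) (Y'v n i) - tensor (Yv n i) (Xv n (Suc i) - Zv n i))"
    by (simp only: tdiff_add[OF fs_add[OF f1 f2] f3] tdiff_add[OF f1 f2] s1 s2 s3)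
qed

lemma tdiff_Dw: "tdiff n (Dw n) = Lin (Dg n) (\<Sum>i\<in>{1..n}. Yv n i + Y'v n i)"
proof -
  let ?S = "\<Sum>i\<in>{1..n}. Yv n i + Y'v n i"
  have a: "tdiff n (tensor (xgen n) (wgen n)) = tensor (Xv n 1) ?S"
    unfolding Xv_1 by (simp add: tdiff_T0 hom_xw fs_xw dP_x dP_w tensor_zero)
  have b: "tdiff n (tensor (wgen n) (xgen n)) = tensor ?S (Xv n (Suc n))"
    unfolding Xv_last by (simp add: tdiff_T2 hom_xw fs_xw dP_x dP_w tensor_zero)
  have "tdiff n (Dw n) = tdiff n (tensor (xgen n) (wgen n)) + tdiff n (D11 n) + tdiff n (tensor (wgen n) (xgen n))"
    unfolding Dw_def
    by (simp only: tdiff_add fs_add fs_tensor fs_xw fs_D11)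
  also have "\<dots> = (\<Sum>i\<in>{1..n}. tensor (Yv n i) (Zv n i) + tensor (Xv n i) (Yv n i)
       + tensor (Y'v n i) (Xv n (Suc i)) + tensor (Zv n i) (Y'v n i))"
    unfolding a b tdiff_D11
    by (rule core_identity[where T = tensor, OF tensor_add_left tensor_add_right])
  also have "\<dots> = Lin (Dg n) ?S"
  proof (subst Lin_sum, simp, rule fs_C, rule sum.cong[OF refl])
    fix i assume "i \<in> {1..n}"
    then have i: "1 \<le> i" "i \<le> n" by auto
    show "tensor (Yv n i) (Zv n i) + tensor (Xv n i) (Yv n i)
       + tensor (Y'v n i) (Xv n (Suc i)) + tensor (Zv n i) (Y'v n i) = Lin (Dg n) (Yv n i + Y'v n i)"
    proof -
      have "Lin (Dg n) (Yv n i + Y'v n i) = Lin (Dg n) (Yv n i) + Lin (Dg n) (Y'v n i)"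
        by (rule Lin_add) (rule fs_YY)+
      also have "\<dots> = Dg n (1, sqprod n i, i) + Dg n (1, sqprod n i \<otimes>\<^bsub>SG n\<^esub> gen n i, i)"
        unfolding Yv_def Y'v_def Lin_pt ..
      finally show ?thesis unfolding Dg_Y[OF i] Dg_Y'[OF i] by (simp only: add.assoc)
    qed
  qed
  finally show ?thesis .
qed



lemma valid_iff: "valid n (k, g, b) \<longleftrightarrow> g \<in> Cn n \<and> b \<in> basis_set n k"
  by (simp add: valid_def)

lemma fs_act: assumes g: "g \<in> Cn n" and "fs f" "inC n f" shows "fs (act n g f)"
proof -
  let ?S = "{t. f t \<noteq> 0}"
  have "{t. act n g f t \<noteq> 0} \<subseteq> gd n g ` ?S"
  proof
    fix t assume "t \<in> {t. act n g f t \<noteq> 0}"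
    then obtain k h b where t: "t = (k, h, b)" "h \<in> Cn n"
        "f (k, inv\<^bsub>SG n\<^esub> g \<otimes>\<^bsub>SG n\<^esub> h, b) \<noteq> 0"
      by (cases t) (auto simp: act_def split: if_splits)
    have "t = gd n g (k, inv\<^bsub>SG n\<^esub> g \<otimes>\<^bsub>SG n\<^esub> h, b)"
      using t g by (simp add: gd_def sg.m_assoc[symmetric])
    then show "t \<in> gd n g ` ?S" using t by auto
  qed
  then show ?thesis using assms(2) finite_surj by blast
qed

lemma Lin_cong: "(\<And>t. F t \<noteq> 0 \<Longrightarrow> D t = D' t) \<Longrightarrow> Lin D F = Lin D' F"
  unfolding Lin_def by (rule ext, rule sum.cong) auto

lemma tdiff_pt: "tdiff n (pt pq) = TD n pq" by (simp add: tdiff_Lin Lin_pt)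

lemma d_gen1: assumes "g \<in> Cn n" "1 \<le> b" "b \<le> n"
  shows "d_gen n (1, g, b) = pt (0, g \<otimes>\<^bsub>SG n\<^esub> gen n b, 0) - pt (0, g, 0)"
  using assms gen_carrier[OF assms(2,3)] by (simp add: d_gen_def gelt_pt xgen_pt act_diff act_pt)
lemma d_gen0: "d_gen n (0, g, b) = (\<lambda>_. 0)" by (simp add: d_gen_def)
lemma d_gen0': "d_gen n (0, g, b) = 0" by (simp add: d_gen_def zero_fun_def)

lemma Dg_valid:
  assumes "valid n t"
  shows "fs (Dg n t) \<and> thomc n (fst t) (Dg n t) \<and>
         (\<forall>g \<in> Cn n. Dg n (gd n g t) = tact n g (Dg n t))"
proof -
  obtain k h b where t: "t = (k, h, b)" by (metis prod.exhaust)
  have h: "h \<in> Cn n" and b: "b \<in> basis_set n k" using assms by (auto simp: t valid_def)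
  consider "k = 0" | "k = 1" | "k = 2" using b by (auto simp: basis_set_def split: if_splits)
  then show ?thesis
  proof cases
    case 1
    then have b0: "b = 0" using b by (simp add: basis_set_def)
    have "thomc n 0 (pt (t, t))" by (rule spred_pt) (use assms 1 t in simp)
    then show ?thesis using 1 h
      by (auto simp: t Dg_def fs_pt gd_def tact_pt)
  next
    case 2
    then have bb: "1 \<le> b" "b \<le> n" using b by (auto simp: basis_set_def)
    have gb: "gen n b \<in> Cn n" using gen_carrier[OF bb] .
    have th: "thomc n 1 (pt ((1, h, b), (0, h \<otimes>\<^bsub>SG n\<^esub> gen n b, 0)) + pt ((0, h, 0), (1, h, b)))"
      by (intro spred_add spred_pt) (use h gb bb in \<open>auto simp: valid_def basis_set_def\<close>)
    have eq: "\<forall>g\<in>Cn n. Dg n (gd n g t) = tact n g (Dg n t)"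
      using h gb 2 by (auto simp: t Dg_def gd_def tact_add tact_pt sg.m_assoc)
    have fsD: "fs (pt ((1, h, b), (0, h \<otimes>\<^bsub>SG n\<^esub> gen n b, 0)) + pt ((0, h, 0), (1, h, b)))"
      by (rule fs_add[OF fs_pt fs_pt])
    have Dgt: "Dg n t = pt ((1, h, b), (0, h \<otimes>\<^bsub>SG n\<^esub> gen n b, 0)) + pt ((0, h, 0), (1, h, b))"
      using 2 by (simp add: t Dg_def)
    have ft: "fst t = 1" using 2 t by simp
    show ?thesis using fsD th eq unfolding Dgt ft by blast
  next
    case 3
    have eq: "\<forall>g\<in>Cn n. Dg n (gd n g t) = tact n g (Dg n t)"
      using h 3 by (auto simp: t Dg_def gd_def tact_comp)
    have "fs (tact n h (Dw n))" by (rule fs_tact[OF h fs_Dw thom_inC2[OF thom_Dw]])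
    moreover have "thomc n 2 (tact n h (Dw n))" by (rule thom_tact[OF h thom_Dw])
    ultimately show ?thesis using 3 eq by (auto simp: t Dg_def)
  qed
qed

lemma dw_valid: "(\<Sum>i\<in>{1..n}. Yv n i + Y'v n i) t \<noteq> 0 \<Longrightarrow> valid n t"
  using hom_dw[of n] unfolding spred_def by blast

lemma chain_gen:
  assumes "valid n t" "fst t = Suc k"
  shows "fs (d_gen n t) \<and> tdiff n (Dg n t) = Lin (Dg n) (d_gen n t)"
proof -
  obtain kk h b where t: "t = (kk, h, b)" by (metis prod.exhaust)
  have h: "h \<in> Cn n" and b: "b \<in> basis_set n kk" using assms by (auto simp: t valid_def)
  consider "kk = 1" | "kk = 2" using b assms(2) by (auto simp: t basis_set_def split: if_splits)
  then show ?thesis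
  proof cases
    case 1
    then have bb: "1 \<le> b" "b \<le> n" using b by (auto simp: basis_set_def)
    have gb: "gen n b \<in> Cn n" using gen_carrier[OF bb] .
    let ?a = "(0::nat, h \<otimes>\<^bsub>SG n\<^esub> gen n b, 0::nat)" and ?x = "(0::nat, h, 0::nat)" and ?y = "(1::nat, h, b)"
    have dg: "d_gen n t = pt ?a - pt ?x" using d_gen1[OF h bb] 1 t by simp
    have Dgt: "Dg n t = pt (?y, ?a) + pt (?x, ?y)" using 1 by (simp add: t Dg_def)
    have "tdiff n (Dg n t) = TD n (?y, ?a) + TD n (?x, ?y)"
      unfolding Dgt by (simp only: tdiff_add fs_pt tdiff_pt)
    also have "\<dots> = pt (?a, ?a) - pt (?x, ?x)"
      unfolding TD_def fst_conv snd_conv d_gen1[OF h bb] d_gen0' ind_pt tensor_zero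
      by (simp add: tensor_diff_left tensor_diff_right tensor_pt fun_eq_iff)
    also have "\<dots> = Lin (Dg n) (d_gen n t)"
      unfolding dg by (simp add: Lin_diff fs_pt Lin_pt Dg_def)
    moreover have "fs (d_gen n t)" unfolding dg by (rule fs_diff[OF fs_pt fs_pt])
    ultimately show ?thesis by simp
  next
    case 2
    have b0: "b = 0" using b 2 by (simp add: basis_set_def)
    let ?S = "\<Sum>i\<in>{1..n}. Yv n i + Y'v n i"
    have "d_gen n t = act n h (dw0 n)" unfolding t 2 b0 d_gen_def dw0_def by simp
    then have dg: "d_gen n t = act n h ?S" by (simp only: dw0_eq)
    have "tdiff n (Dg n t) = tdiff n (tact n h (Dw n))" using 2 by (simp add: t Dg_def)
    also have "\<dots> = tact n h (tdiff n (Dw n))"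
      by (rule tdiff_tact[OF h fs_Dw thom_inC2[OF thom_Dw]])
    also have "\<dots> = tact n h (Lin (Dg n) ?S)" by (simp only: tdiff_Dw)
    also have "\<dots> = Lin (\<lambda>t. tact n h (Dg n t)) ?S" by (rule tact_Lin)
    also have "\<dots> = Lin (\<lambda>t. Dg n (gd n h t)) ?S"
      unfolding Lin_def
      by (rule ext, rule sum.cong[OF refl]) (use Dg_valid[OF dw_valid] h in auto)
    also have "\<dots> = Lin (Dg n) (act n h ?S)"
      by (rule Lin_act[symmetric, OF h fs_dw hom_inC[OF hom_dw]])
    finally have e: "tdiff n (Dg n t) = Lin (Dg n) (d_gen n t)" unfolding dg .
    have "fs (act n h ?S)" by (rule fs_act[OF h fs_dw hom_inC[OF hom_dw]])
    then show ?thesis using e dg by simp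
  qed
qed

lemma Lin_const_pt: "Lin D (pt a) = D a" by (rule Lin_pt)

theorem main:
  shows "is_diagonal_approx n (\<lambda>k f. Lin (Dg n) f)"
  unfolding is_diagonal_approx_def
proof (intro conjI allI impI)
  fix k f assume f: "in_P n k f"
  have ff: "fs f" and hf: "homc n k f" using f by (auto simp: in_P_iff)
  have vt: "\<And>t. f t \<noteq> 0 \<Longrightarrow> valid n t \<and> fst t = k" using hf unfolding spred_def by blast
  show "in_T n k (Lin (Dg n) f)"
    unfolding in_T_iff
  proof
    show "fs (Lin (Dg n) f)"
    proof (rule fs_Lin[OF ff])
      fix t assume "f t \<noteq> 0"
      then have "valid n t" using vt by auto
      then show "fs (Dg n t)" using Dg_valid[of n t] by simp
    qed
    show "thomc n k (Lin (Dg n) f)"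
    proof (rule spred_Lin)
      fix t assume "f t \<noteq> 0"
      then have "valid n t" "fst t = k" using vt by auto
      then show "thomc n k (Dg n t)" using Dg_valid[of n t] by simp
    qed
  qed
next
  fix k f f' assume "in_P n k f" "in_P n k f'"
  then show "Lin (Dg n) (f + f') = Lin (Dg n) f + Lin (Dg n) f'"
    by (intro Lin_add) (auto simp: in_P_iff)
next
  fix k g f assume g: "g \<in> Cn n" and f: "in_P n k f"
  have ff: "fs f" and hf: "homc n k f" using f by (auto simp: in_P_iff)
  have vt: "\<And>t. f t \<noteq> 0 \<Longrightarrow> valid n t" using hf unfolding spred_def by blast
  have "Lin (Dg n) (act n g f) = Lin (\<lambda>t. Dg n (gd n g t)) f"
    by (rule Lin_act[OF g ff hom_inC[OF hf]])
  also have "\<dots> = Lin (\<lambda>t. tact n g (Dg n t)) f"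
  proof (rule Lin_cong)
    fix t assume "f t \<noteq> 0"
    then have "valid n t" using vt by auto
    then show "Dg n (gd n g t) = tact n g (Dg n t)" using Dg_valid[of n t] g by simp
  qed
  also have "\<dots> = tact n g (Lin (Dg n) f)" by (rule tact_Lin[symmetric])
  finally show "Lin (Dg n) (act n g f) = tact n g (Lin (Dg n) f)" .
next
  fix k f assume f: "in_P n (Suc k) f"
  have ff: "fs f" and hf: "homc n (Suc k) f" using f by (auto simp: in_P_iff)
  have vt: "\<And>t. f t \<noteq> 0 \<Longrightarrow> valid n t \<and> fst t = Suc k" using hf unfolding spred_def by blast
  have "tdiff n (Lin (Dg n) f) = Lin (\<lambda>t. tdiff n (Dg n t)) f"
    unfolding tdiff_Lin
  proof (rule Lin_compose[OF ff])
    fix t assume "f t \<noteq> 0"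
    then have "valid n t" using vt by auto
    then show "fs (Dg n t)" using Dg_valid[of n t] by simp
  qed
  also have "\<dots> = Lin (\<lambda>t. Lin (Dg n) (d_gen n t)) f"
  proof (rule Lin_cong)
    fix t assume "f t \<noteq> 0"
    then have "valid n t" "fst t = Suc k" using vt by auto
    then show "tdiff n (Dg n t) = Lin (Dg n) (d_gen n t)" using chain_gen by blast
  qed
  also have "\<dots> = Lin (Dg n) (dP n f)"
    unfolding dP_Lin
  proof (rule Lin_compose[OF ff, symmetric])
    fix t assume "f t \<noteq> 0"
    then have "valid n t" "fst t = Suc k" using vt by auto
    then show "fs (d_gen n t)" using chain_gen by blast
  qed
  finally show "tdiff n (Lin (Dg n) (f)) = Lin (Dg n) (dP n f)" .
next
  fix f assume f: "in_P n 0 f"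
  have ff: "fs f" and hf: "homc n 0 f" using f by (auto simp: in_P_iff)
  have vt: "\<And>t. f t \<noteq> 0 \<Longrightarrow> valid n t \<and> fst t = 0" using hf unfolding spred_def by blast
  define c :: "(nat \<times> elt \<times> nat) \<times> (nat \<times> elt \<times> nat) \<Rightarrow> unit \<Rightarrow> int" where
    "c = (\<lambda>pq _. if fst (fst pq) = 0 \<and> fst (snd pq) = 0 then 1 else 0)"
  have te: "\<And>F. teps F = Lin c F ()" by (simp add: teps_def Lin_def c_def)
  have "teps (Lin (Dg n) f) = Lin (\<lambda>t. Lin c (Dg n t)) f ()"
  proof -
    have "Lin c (Lin (Dg n) f) = Lin (\<lambda>t. Lin c (Dg n t)) f"
    proof (rule Lin_compose[OF ff])
      fix t assume "f t \<noteq> 0"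
      then have "valid n t" using vt by auto
      then show "fs (Dg n t)" using Dg_valid[of n t] by simp
    qed
    then show ?thesis unfolding te by simp
  qed
  also have "\<dots> = (\<Sum>t\<in>{t. f t \<noteq> 0}. f t)"
    unfolding Lin_def[of _ f]
  proof (rule sum.cong[OF refl])
    fix t assume "t \<in> {t. f t \<noteq> 0}"
    then have "valid n t" "fst t = 0" using vt by auto
    then obtain g b where t: "t = (0, g, b)" by (metis prod.exhaust fst_conv)
    show "f t * Lin c (Dg n t) () = f t" by (simp add: t Dg_def Lin_pt c_def)
  qed
  finally show "teps (Lin (Dg n) f) = epsP f" by (simp add: epsP_def)
qed



lemma proj_add: "proj r (F + G) = proj r F + proj r G"
  by (auto simp: proj_def fun_eq_iff)
lemma proj_id: "spred (\<lambda>z. fst (fst z) = r) F \<Longrightarrow> proj r F = F"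
  unfolding spred_def proj_def by (rule ext) (metis)
lemma proj_0: "spred (\<lambda>z. fst (fst z) \<noteq> r) F \<Longrightarrow> proj r F = 0"
  unfolding spred_def proj_def by (rule ext) (metis zero_fun_apply)
lemma spred_tensor_fst: "homc n k u \<Longrightarrow> spred (\<lambda>z. fst (fst z) = k) (tensor u v)"
  by (rule spred_mono[OF spred_tensor[of _ u "\<lambda>_. True" v]]) (auto simp: spred_def)

lemma D11_fst: "spred (\<lambda>z. fst (fst z) = 1) (D11 n)"
  unfolding D11_pt
  by (intro spred_add spred_sum spred_tensor_fst[where n=n] hom_C hom_Y) auto

lemma Lin_w: "Lin (Dg n) (wgen n) = Dw n"
  by (simp add: wgen_pt Lin_pt Dg_def tact_one[OF thom_inC2[OF thom_Dw]])

lemma proj0_Dw: "proj 0 (Dw n) = tensor (xgen n) (wgen n)"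
proof -
  have a: "proj 0 (tensor (xgen n) (wgen n)) = tensor (xgen n) (wgen n)"
    by (rule proj_id, rule spred_tensor_fst, rule hom_xw)
  have b: "proj 0 (D11 n) = 0" by (rule proj_0, rule spred_mono[OF D11_fst]) simp
  have c: "proj 0 (tensor (wgen n) (xgen n)) = 0"
    by (rule proj_0, rule spred_mono[OF spred_tensor_fst[OF hom_xw(2)]]) simp
  show ?thesis unfolding Dw_def proj_add a b c by simp
qed

lemma proj1_Dw: "proj 1 (Dw n) = D11 n"
proof -
  have a: "proj 1 (tensor (xgen n) (wgen n)) = 0"
    by (rule proj_0, rule spred_mono[OF spred_tensor_fst[OF hom_xw(1)]]) simp
  have b: "proj 1 (D11 n) = D11 n" by (rule proj_id, rule D11_fst)
  have c: "proj 1 (tensor (wgen n) (xgen n)) = 0"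
    by (rule proj_0, rule spred_mono[OF spred_tensor_fst[OF hom_xw(2)]]) simp
  show ?thesis unfolding Dw_def proj_add a b c by simp
qed

theorem mainTheorem4:
  fixes n :: nat
  assumes "n \<ge> 2"
  shows "\<exists>\<Delta>. is_diagonal_approx n \<Delta>
     \<and> \<Delta> 0 (xgen n) = tensor (xgen n) (xgen n)
     \<and> (\<forall>i\<in>{1..n}. \<Delta> 1 (ygen n i) =
            tensor (ygen n i) (act n (gen n i) (xgen n)) + tensor (xgen n) (ygen n i))
     \<and> proj 0 (\<Delta> 2 (wgen n)) = tensor (xgen n) (wgen n)
     \<and> proj 1 (\<Delta> 2 (wgen n)) =
         (\<Sum>i\<in>{1..n}.
            (\<Sum>j\<in>{1..<i}. tensor (act n (sqprod n j) (ygen n j + act n (gen n j) (ygen n j)))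
                                  (act n (sqprod n i) (ygen n i)))
          + (\<Sum>j\<in>{1..<i}. tensor (act n (sqprod n j) (ygen n j + act n (gen n j) (ygen n j)))
                                  (act n (mult (surface_group n) (sqprod n i) (gen n i)) (ygen n i)))
          + tensor (act n (sqprod n i) (ygen n i))
                   (act n (mult (surface_group n) (sqprod n i) (gen n i)) (ygen n i)))"
proof (rule exI[of _ "\<lambda>k f. Lin (Dg n) f"], intro conjI ballI)
  show "is_diagonal_approx n (\<lambda>k f. Lin (Dg n) f)" by (rule main)
  show "Lin (Dg n) (xgen n) = tensor (xgen n) (xgen n)"
    by (simp add: xgen_pt Lin_pt Dg_def tensor_pt)
  fix i assume "i \<in> {1..n}"
  then have i: "1 \<le> i" "i \<le> n" by auto
  show "Lin (Dg n) (ygen n i) = tensor (ygen n i) (act n (gen n i) (xgen n)) + tensor (xgen n) (ygen n i)"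
    using gc[OF i] by (simp add: ygen_pt xgen_pt Lin_pt Dg_def tensor_pt act_pt fun_eq_iff)
next
  show "proj 0 (Lin (Dg n) (wgen n)) = tensor (xgen n) (wgen n)" unfolding Lin_w by (rule proj0_Dw)
qed (simp only: Lin_w proj1_Dw D11_def)

end
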